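(* Let $c=5/4$, $\alpha>2$, $\lambda_b>0$, $P>0$, $\tilde\sigma^2\ge 0$ and $\omega>0$ be constants. Let $d_1,d_2$ be independent random variables, each with probability density $f_d(x)=2c\lambda_b\pi x e^{-c\lambda_b\pi x^2}$, $x\ge 0$, and let $d=\max\{d_1,d_2\}$. For $s\in\mathbb{C}$ with $\mathrm{Re}(s)>0$ define $$\varphi(s)=\mathbb{E}\left\{\exp\left(-\frac{\tilde\sigma^2}{P}\,s\,d^{\alpha}-\pi\lambda_b\,\omega\, d^2 s^{2/\alpha}\right)\right\}.$$ Then $$\varphi(s)=\frac{2c}{c+\omega s^{2/\alpha}}\,H_{1,1}^{1,1}\left(\frac{\tilde\sigma^2}{P}\,s\left(\pi\lambda_b\left(c+\omega s^{2/\alpha}\right)\right)^{-\alpha/2}\right)-\frac{2c}{2c+\omega s^{2/\alpha}}\,H_{1,1}^{1,1}\left(\frac{\tilde\sigma^2}{P}\,s\left(\pi\lambda_b\left(2c+\omega s^{2/\alpha}\right)\right)^{-\alpha/2}\right),$$ where $H_{1,1}^{1,1}(x)$ denotes the Fox H-function $H_{1,1}^{1,1}\left(x\,\middle|\,\begin{smallmatrix}(0,\alpha/2)\\(0,1)\end{smallmatrix}\right)$. Moreover, for fixed $s$ (and fixed $\omega,\lambda_b,\alpha$), in the limit $\tilde\sigma^2/P\to 0$, $$\varphi(s)\to\frac{2c}{c+\omega s^{2/\alpha}}-\frac{2c}{2c+\omega s^{2/\alpha}}.$$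
   Context: Model: small-cell base stations form a homogeneous Poisson point process of intensity $\lambda_b$; the distance between a user and its serving (closest) base station is modeled by the density $f_d$ above. Under random NOMA grouping, two users are paired and the far user's link distance $d$ is the larger of the two i.i.d. distances. Here $\tilde\sigma^2=\sigma^2\|\mathbf{u}\|^2$ is the filtered noise power, $P$ the transmit power per stream, and $\omega$ plays the role of $\Gamma(1-2/\alpha)\left(\frac{\rho_I}{P}|\mathbf{u}^{\mathrm H}\mathbf{1}|^2\right)^{2/\alpha}$ (interference-related constant), treated as a fixed positive number. Powers $s^{2/\alpha}$, $(\cdot)^{-\alpha/2}$ and $x^{-\xi}$ use principal branches. The Fox H-function is defined by the Mellin–Barnes integral $H_{1,1}^{1,1}\left(x\,\middle|\,\begin{smallmatrix}(0,\alpha/2)\\(0,1)\end{smallmatrix}\right)=\frac{1}{2\pi \mathrm{i}}\int_{\mathcal L}\Gamma(\xi)\,\Gamma\left(1-\tfrac{\alpha}{2}\xi\right)x^{-\xi}\,d\xi$, where $\mathcal L$ is a vertical line $\mathrm{Re}(\xi)=\gamma$ with $0<\gamma<2/\alpha$ separating the poles of $\Gamma(\xi)$ from those of $\Gamma(1-\frac{\alpha}{2}\xi)$. *)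

theory Defs
  imports "HOL-Probability.Probability"
begin

definition dist_density :: "real \<Rightarrow> real \<Rightarrow> real \<Rightarrow> real" where
  "dist_density c lb x = (if 0 \<le> x then 2 * c * lb * pi * x * exp (- c * lb * pi * x\<^sup>2) else 0)"

text \<open>Fox H-function H^{1,1}_{1,1}(x | (0,alpha/2); (0,1)) via its Mellin--Barnes integral
  (1/(2 pi i)) \<integral>_L Gamma(xi) Gamma(1 - alpha/2 xi) x^(-xi) d xi along the vertical line
  Re xi = 1/alpha (which lies in (0, 2/alpha)); parametrising xi = 1/alpha + i t gives d xi = i dt.
  At x = 0 the integral is not defined; there we use the standard value H(0) = 1 (the limit
  of the function at 0, the k = 0 term of its residue series).\<close>
definition mb_line :: "real \<Rightarrow> real \<Rightarrow> complex" where
  "mb_line \<alpha> t = Complex (1 / \<alpha>) t"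

definition foxH11 :: "real \<Rightarrow> complex \<Rightarrow> complex" where
  "foxH11 \<alpha> x =
     (if x = 0 then 1
      else (1 / (2 * pi)) *\<^sub>R
        (LBINT t. Gamma (mb_line \<alpha> t) * Gamma (1 - of_real (\<alpha> / 2) * mb_line \<alpha> t)
                  * x powr (- mb_line \<alpha> t)))"

end

theory Submission
  imports Defs
begin

lemma powr_add_nat:
  assumes "x \<noteq> 0"
  shows "(x::complex) powr (a + of_nat n - 1) = x powr (a - 1) * x ^ n"
proof -
  have "x powr (a + of_nat n - 1) = x powr ((a - 1) + of_nat n)" by (simp add: algebra_simps)
  also have "\<dots> = x powr (a - 1) * x powr of_nat n" by (rule powr_add)
  also have "\<dots> = x powr (a - 1) * x ^ n" using assms by (simp add: powr_nat')
  finally show ?thesis .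
qed

lemma gamma_series_term:
  fixes a :: complex
  assumes "a \<notin> \<int>\<^sub>\<le>\<^sub>0"
  shows "Gamma (a + of_nat n) * (w ^ n / fact n) = Gamma a * (((- a) gchoose n) * (- w) ^ n)"
proof -
  have "Gamma (a + of_nat n) = Gamma a * pochhammer a n"
    using pochhammer_Gamma[OF assms, of n] assms by (simp add: Gamma_eq_zero_iff field_simps)
  moreover have "((- a) gchoose n) * (- w) ^ n = pochhammer a n * w ^ n / fact n"
    by (simp add: gbinomial_pochhammer power_mult_distrib[symmetric] field_simps)
  ultimately show ?thesis by (simp add: field_simps)
qed

lemma gamma_disk:
  fixes \<xi> w :: complex
  assumes xi: "Re \<xi> > 0" and w: "norm w < 1"
  shows "integrable lebesgue (\<lambda>v. indicator {0<..} v *\<^sub>R (of_real v powr (\<xi> - 1) * exp (- (1 - w) * of_real v)))"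
    and "integral\<^sup>L lebesgue (\<lambda>v. indicator {0<..} v *\<^sub>R (of_real v powr (\<xi> - 1) * exp (- (1 - w) * of_real v)))
          = Gamma \<xi> * (1 - w) powr (- \<xi>)"
proof -
  define f where "f n v = indicator {0<..} v *\<^sub>R (of_real v powr (\<xi> + of_nat n - 1) / of_real (exp v) * (w ^ n / fact n))" for n v
  have xin: "Re (\<xi> + of_nat n) > 0" for n using xi by simp
  have gi: "integrable lebesgue (\<lambda>v. indicator {0<..} v *\<^sub>R (of_real v powr (\<xi> + of_nat n - 1) / of_real (exp v)))" for n
    using absolutely_integrable_Gamma_integral'[OF xin[of n]] unfolding set_integrable_def .
  have int_n: "integrable lebesgue (f n)" for n
    unfolding f_def using integrable_mult_right[OF gi[of n], of "w ^ n / fact n"]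
    by (simp add: mult.commute mult.left_commute)
  have int_eq: "integral\<^sup>L lebesgue (f n) = Gamma (\<xi> + of_nat n) * (w ^ n / fact n)" for n
  proof -
    have gint: "integral\<^sup>L lebesgue (\<lambda>v. indicator {0<..} v *\<^sub>R (of_real v powr (\<xi> + of_nat n - 1) / of_real (exp v)))
          = Gamma (\<xi> + of_nat n)"
      using set_lebesgue_integral_eq_integral(2)[OF absolutely_integrable_Gamma_integral'[OF xin[of n]]]
        Gamma_integral_complex'[OF xin[of n]]
      unfolding set_lebesgue_integral_def by (simp add: integral_unique)
    have feq: "f n = (\<lambda>v. (indicator {0<..} v *\<^sub>R (of_real v powr (\<xi> + of_nat n - 1) / of_real (exp v))) * (w ^ n / fact n))"
      unfolding f_def by (auto simp: indicator_def)
    show ?thesis by (subst feq, subst integral_mult_left_zero, subst gint, rule refl)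
  qed
  have norm_eq: "integral\<^sup>L lebesgue (\<lambda>v. norm (f n v)) = Gamma (Re \<xi> + real n) * (norm w ^ n / fact n)" for n
  proof -
    define a where "a = Re \<xi> + real n"
    have a: "Re (complex_of_real a) > 0" using xi by (simp add: a_def)
    have *: "norm (f n v) = Re (indicator {0<..} v *\<^sub>R (of_real v powr (complex_of_real a - 1) / of_real (exp v))) * (norm w ^ n / fact n)" for v
    proof (cases "v > 0")
      case True
      have "of_real v powr (complex_of_real a - 1) = of_real (v powr (a - 1))"
        using True powr_of_real[of v "a - 1"] by simp
      moreover have "norm (of_real v powr (\<xi> + of_nat n - 1)) = v powr (a - 1)"
        using True by (simp add: norm_powr_real_powr a_def)
      ultimately show ?thesis using True
        by (simp add: f_def norm_mult norm_divide norm_power indicator_def)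
    qed (simp add: f_def indicator_def)
    define F where "F v = indicator {0<..} v *\<^sub>R (of_real v powr (complex_of_real a - 1) / of_real (exp v))" for v
    have Fint: "integrable lebesgue F"
      using absolutely_integrable_Gamma_integral'[OF a] unfolding set_integrable_def F_def .
    have "integral\<^sup>L lebesgue F = Gamma (complex_of_real a)"
      using set_lebesgue_integral_eq_integral(2)[OF absolutely_integrable_Gamma_integral'[OF a]]
        Gamma_integral_complex'[OF a]
      unfolding set_lebesgue_integral_def F_def by (simp add: integral_unique)
    moreover have "integral\<^sup>L lebesgue (\<lambda>v. Re (F v)) = Re (integral\<^sup>L lebesgue F)"
      by (rule integral_Re[OF Fint])
    ultimately have "integral\<^sup>L lebesgue (\<lambda>v. Re (F v)) = Gamma a"
      by (simp add: Gamma_complex_of_real)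
    then have "integral\<^sup>L lebesgue (\<lambda>v. Re (F v) * (norm w ^ n / fact n)) = Gamma a * (norm w ^ n / fact n)"
      by simp
    then show ?thesis unfolding * a_def F_def by simp
  qed
  have summ: "summable (\<lambda>n. integral\<^sup>L lebesgue (\<lambda>v. norm (f n v)))"
  proof -
    have ra: "Re \<xi> \<notin> \<int>\<^sub>\<le>\<^sub>0" using xi by (auto elim!: nonpos_Ints_cases)
    have eq: "Gamma (Re \<xi> + real n) * (norm w ^ n / fact n) = Gamma (Re \<xi>) * (((- Re \<xi>) gchoose n) * (- norm w) ^ n)" for n
    proof -
      have "Gamma (Re \<xi> + real n) = Gamma (Re \<xi>) * pochhammer (Re \<xi>) n"
        using pochhammer_Gamma[OF ra, of n] ra by (simp add: Gamma_eq_zero_iff field_simps)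
      moreover have "((- Re \<xi>) gchoose n) * (- norm w) ^ n = pochhammer (Re \<xi>) n * norm w ^ n / fact n"
        by (simp add: gbinomial_pochhammer power_mult_distrib[symmetric] field_simps)
      ultimately show ?thesis by (simp add: field_simps)
    qed
    have "summable (\<lambda>n. ((- Re \<xi>) gchoose n) * (- norm w) ^ n)"
      using gen_binomial_real[of "- norm w" "- Re \<xi>"] w by (auto simp: sums_iff)
    then show ?thesis unfolding norm_eq eq by (rule summable_mult)
  qed
  have ptw: "(\<lambda>n. f n v) sums (indicator {0<..} v *\<^sub>R (of_real v powr (\<xi> - 1) * exp (- (1 - w) * of_real v)))" for v
  proof (cases "v > 0")
    case True
    have e: "f n v = (of_real v powr (\<xi> - 1) / of_real (exp v)) * ((w * of_real v) ^ n /\<^sub>R fact n)" for n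
    proof -
      have "of_real v powr (\<xi> + of_nat n - 1) = of_real v powr (\<xi> - 1) * (of_real v :: complex) ^ n"
        using True by (simp add: powr_add_nat)
      then show ?thesis using True
        by (simp add: f_def indicator_def power_mult_distrib scaleR_conv_of_real field_simps)
    qed
    have "(\<lambda>n. (of_real v powr (\<xi> - 1) / of_real (exp v)) * ((w * of_real v) ^ n /\<^sub>R fact n))
          sums ((of_real v powr (\<xi> - 1) / of_real (exp v)) * exp (w * of_real v))"
      by (intro sums_mult exp_converges)
    moreover have "(of_real v powr (\<xi> - 1) / of_real (exp v)) * exp (w * of_real v)
        = indicator {0<..} v *\<^sub>R (of_real v powr (\<xi> - 1) * exp (- (1 - w) * of_real v))"
      using True by (simp add: indicator_def exp_diff algebra_simps exp_of_real[symmetric] exp_minus field_simps)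
    ultimately show ?thesis unfolding e by simp
  qed (simp add: f_def indicator_def)
  have asumm: "AE v in lebesgue. summable (\<lambda>n. norm (f n v))"
  proof (intro AE_I2)
    fix v :: real
    show "summable (\<lambda>n. norm (f n v))"
    proof (cases "v > 0")
      case True
      have e: "norm (f n v) = norm (of_real v powr (\<xi> - 1) / of_real (exp v)) * norm ((of_real (norm w * v)) ^ n /\<^sub>R fact n :: complex)" for n
      proof -
        have "of_real v powr (\<xi> + of_nat n - 1) = of_real v powr (\<xi> - 1) * (of_real v :: complex) ^ n"
          using True by (simp add: powr_add_nat)
        then show ?thesis using True
          by (simp add: f_def indicator_def norm_mult norm_divide norm_power abs_mult power_mult_distrib field_simps)
      qed
      show ?thesis unfolding e by (intro summable_mult summable_norm_exp)
    qed (simp add: f_def indicator_def)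
  qed
  have sint: "integrable lebesgue (\<lambda>v. \<Sum>n. f n v)"
    by (rule integrable_suminf[OF int_n asumm summ])
  have sval: "integral\<^sup>L lebesgue (\<lambda>v. \<Sum>n. f n v) = (\<Sum>n. integral\<^sup>L lebesgue (f n))"
    by (rule integral_suminf[OF int_n asumm summ])
  have funeq: "(\<lambda>v. \<Sum>n. f n v) = (\<lambda>v. indicator {0<..} v *\<^sub>R (of_real v powr (\<xi> - 1) * exp (- (1 - w) * of_real v)))"
    using ptw by (auto simp: sums_iff)
  show "integrable lebesgue (\<lambda>v. indicator {0<..} v *\<^sub>R (of_real v powr (\<xi> - 1) * exp (- (1 - w) * of_real v)))"
    using sint funeq by simp
  have xnp: "\<xi> \<notin> \<int>\<^sub>\<le>\<^sub>0" using xi by (auto elim!: nonpos_Ints_cases)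
  have "(\<lambda>n. integral\<^sup>L lebesgue (f n)) sums (Gamma \<xi> * (1 - w) powr (- \<xi>))"
  proof -
    have "(\<lambda>n. ((- \<xi>) gchoose n) * (- w) ^ n) sums (1 + - w) powr (- \<xi>)"
      using gen_binomial_complex[of "- w" "- \<xi>"] w by simp
    then have "(\<lambda>n. Gamma \<xi> * (((- \<xi>) gchoose n) * (- w) ^ n)) sums (Gamma \<xi> * (1 - w) powr (- \<xi>))"
      by (intro sums_mult) simp
    then show ?thesis unfolding int_eq gamma_series_term[OF xnp] .
  qed
  then show "integral\<^sup>L lebesgue (\<lambda>v. indicator {0<..} v *\<^sub>R (of_real v powr (\<xi> - 1) * exp (- (1 - w) * of_real v)))
          = Gamma \<xi> * (1 - w) powr (- \<xi>)"
    using sval funeq by (simp add: sums_iff)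
qed

lemma absint_has:
  fixes f :: "'a::euclidean_space \<Rightarrow> 'b::euclidean_space"
  assumes "f absolutely_integrable_on S" "integral S f = b"
  shows "(f has_integral b) S"
  using assms set_lebesgue_integral_eq_integral(1)[OF assms(1)] by (metis integrable_integral)

lemma gamma_scaled:
  fixes \<xi> z :: complex
  assumes z: "Re z > 0" and xi: "Re \<xi> > 0"
  shows "(\<lambda>v. of_real v powr (\<xi> - 1) * exp (- z * of_real v)) absolutely_integrable_on {0<..}"
    and "integral {0<..} (\<lambda>v. of_real v powr (\<xi> - 1) * exp (- z * of_real v)) = Gamma \<xi> * z powr (- \<xi>)"
proof -
  define r where "r = Re z / (cmod z)\<^sup>2"
  have z0: "z \<noteq> 0" using z by auto
  have r: "r > 0" using z z0 by (simp add: r_def)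
  define w where "w = 1 - of_real r * z"
  have "(cmod w)\<^sup>2 = 1 - (Re z)\<^sup>2 / (cmod z)\<^sup>2"
  proof -
    have "(cmod w)\<^sup>2 = (1 - r * Re z)\<^sup>2 + (r * Im z)\<^sup>2"
      by (simp add: w_def cmod_power2)
    also have "\<dots> = 1 - 2 * r * Re z + r\<^sup>2 * ((Re z)\<^sup>2 + (Im z)\<^sup>2)"
      by (simp add: power2_eq_square algebra_simps)
    also have "\<dots> = 1 - 2 * r * Re z + r\<^sup>2 * (cmod z)\<^sup>2"
      by (simp add: cmod_power2)
    also have "\<dots> = 1 - (Re z)\<^sup>2 / (cmod z)\<^sup>2"
      using z0 by (simp add: r_def power2_eq_square field_simps)
    finally show ?thesis .
  qed
  moreover have "(Re z)\<^sup>2 / (cmod z)\<^sup>2 > 0" using z z0 by simp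
  ultimately have "(cmod w)\<^sup>2 < 1" by simp
  then have w: "cmod w < 1" by (simp add: power_less_one_iff abs_square_less_1)
  have wz: "1 - w = of_real r * z" by (simp add: w_def)
  define F where "F u = of_real u powr (\<xi> - 1) * exp (- (of_real r * z) * of_real u)" for u :: real
  have Fi: "F absolutely_integrable_on {0<..}"
    using gamma_disk(1)[OF xi w] unfolding set_integrable_def F_def wz .
  have Fv: "integral {0<..} F = Gamma \<xi> * (of_real r * z) powr (- \<xi>)"
    using gamma_disk(2)[OF xi w] set_lebesgue_integral_eq_integral(2)[OF Fi]
    unfolding set_lebesgue_integral_def F_def wz by simp
  define f where "f v = of_real v powr (\<xi> - 1) * exp (- z * of_real v)" for v :: real
  have eq: "\<bar>r\<bar> *\<^sub>R f (r * u) = of_real r powr \<xi> * F u" if "u \<in> {0<..}" for u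
  proof -
    have "of_real (r * u) powr (\<xi> - 1) = of_real r powr (\<xi> - 1) * of_real u powr (\<xi> - 1)"
      using r that by (simp add: powr_times_real_left)
    moreover have "of_real r * of_real r powr (\<xi> - 1) = of_real r powr \<xi>"
      using r by (simp add: powr_diff)
    ultimately show ?thesis using r
      by (simp add: f_def F_def scaleR_conv_of_real algebra_simps)
  qed
  have img: "(\<lambda>u. r * u) ` {0<..} = {0<..}"
  proof -
    have "x \<in> (\<lambda>u. r * u) ` {0<..}" if "x > 0" for x
      using r that by (intro image_eqI[of _ _ "x / r"]) auto
    then show ?thesis using r by auto
  qed
  have A: "(\<lambda>u. of_real r powr \<xi> * F u) absolutely_integrable_on {0<..}"
    using Fi by (rule set_integrable_mult_right)
  have B: "integral {0<..} (\<lambda>u. of_real r powr \<xi> * F u) = Gamma \<xi> * z powr (- \<xi>)"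
  proof -
    have "integral {0<..} (\<lambda>u. of_real r powr \<xi> * F u) = of_real r powr \<xi> * integral {0<..} F"
      by (simp add: integral_mult_right)
    also have "(of_real r * z) powr (- \<xi>) = of_real r powr (- \<xi>) * z powr (- \<xi>)"
      using r by (simp add: powr_times_real_left)
    then have "of_real r powr \<xi> * integral {0<..} F = Gamma \<xi> * z powr (- \<xi>)"
      using r by (simp add: Fv powr_minus field_simps)
    finally show ?thesis .
  qed
  have "(\<lambda>u. \<bar>r\<bar> *\<^sub>R f (r * u)) absolutely_integrable_on {0<..} \<and>
        integral {0<..} (\<lambda>u. \<bar>r\<bar> *\<^sub>R f (r * u)) = Gamma \<xi> * z powr (- \<xi>)"
  proof
    show "(\<lambda>u. \<bar>r\<bar> *\<^sub>R f (r * u)) absolutely_integrable_on {0<..}"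
      using A by (rule absolutely_integrable_spike[OF _ negligible_empty]) (simp add: eq)
    show "integral {0<..} (\<lambda>u. \<bar>r\<bar> *\<^sub>R f (r * u)) = Gamma \<xi> * z powr (- \<xi>)"
      using B by (metis (no_types, lifting) eq integral_cong)
  qed
  then have "f absolutely_integrable_on (\<lambda>u. r * u) ` {0<..} \<and> integral ((\<lambda>u. r * u) ` {0<..}) f = Gamma \<xi> * z powr (- \<xi>)"
    by (subst (asm) has_absolute_integral_change_of_variables_real[where g="\<lambda>u. r * u" and h="\<lambda>_. r"])
       (use r in \<open>auto intro!: derivative_eq_intros inj_onI\<close>)
  then show "(\<lambda>v. of_real v powr (\<xi> - 1) * exp (- z * of_real v)) absolutely_integrable_on {0<..}"
    and "integral {0<..} (\<lambda>v. of_real v powr (\<xi> - 1) * exp (- z * of_real v)) = Gamma \<xi> * z powr (- \<xi>)"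
    unfolding img f_def by auto
qed

lemma integrable_exp_abs:
  fixes c :: real
  assumes c: "c > 0"
  shows "integrable lborel (\<lambda>t::real. exp (- c * \<bar>t\<bar>))"
proof -
  have r: "(\<lambda>t::real. exp (- c * t)) integrable_on {0..}"
    using integrable_on_exp_minus_to_infinity[OF c, of 0] .
  then have "(\<lambda>t::real. exp (- c * t)) absolutely_integrable_on {0..}"
    by (intro nonnegative_absolutely_integrable_1) auto
  then have "integrable lebesgue (\<lambda>t::real. indicator {0..} t *\<^sub>R exp (- c * t))"
    by (simp add: set_integrable_def)
  then have g: "integrable lborel (\<lambda>t::real. indicator {0..} t *\<^sub>R exp (- c * t))"
    by (subst integrable_completion[symmetric]) auto
  have g2: "integrable lborel (\<lambda>t::real. indicator {0..} (0 + (-1) * t) *\<^sub>R exp (- c * (0 + (-1) * t)))"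
    using g by (subst lborel_integrable_real_affine_iff) auto
  have "integrable lborel (\<lambda>t::real. indicator {0..} t *\<^sub>R exp (- c * t) + indicator {0..} (0 + (-1) * t) *\<^sub>R exp (- c * (0 + (-1) * t)))"
    using g g2 by (rule Bochner_Integration.integrable_add)
  then show ?thesis
    by (rule Bochner_Integration.integrable_bound) (auto simp: indicator_def)
qed

lemma gamma_decay:
  fixes a t \<theta> :: real
  assumes a: "a > 0" and th: "0 \<le> \<theta>" "\<theta> < pi / 2"
  shows "norm (Gamma (Complex a t)) \<le> Gamma a / cos \<theta> powr a * exp (- \<theta> * \<bar>t\<bar>)"
proof -
  define \<phi> where "\<phi> = (if t \<ge> 0 then \<theta> else - \<theta>)"
  define z where "z = cis \<phi>"
  define \<xi> where "\<xi> = Complex a t"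
  have cth: "cos \<theta> > 0" using th by (intro cos_gt_zero_pi) auto
  have phi: "\<phi> \<in> {-pi<..pi}" using th pi_gt_zero by (auto simp: \<phi>_def)
  have Rez: "Re z = cos \<theta>" by (simp add: z_def \<phi>_def)
  have z0: "z \<noteq> 0" by (simp add: z_def)
  have xi: "Re \<xi> > 0" using a by (simp add: \<xi>_def)
  define f where "f v = of_real v powr (\<xi> - 1) * exp (- z * of_real v)" for v :: real
  have fi: "f absolutely_integrable_on {0<..}" unfolding f_def
    by (rule gamma_scaled(1)) (use Rez cth xi in auto)
  have fv: "integral {0<..} f = Gamma \<xi> * z powr (- \<xi>)" unfolding f_def
    by (rule gamma_scaled(2)) (use Rez cth xi in auto)
  define g :: "real \<Rightarrow> complex" where "g v = of_real v powr (of_real a - 1) * exp (- of_real (cos \<theta>) * of_real v)" for v :: real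
  have gi: "g absolutely_integrable_on {0<..}" unfolding g_def
    by (rule gamma_scaled(1)) (use cth a in auto)
  have gv: "integral {0<..} g = Gamma (of_real a) * of_real (cos \<theta>) powr (- of_real a)" unfolding g_def
    by (rule gamma_scaled(2)) (use cth a in auto)
  have gh: "((\<lambda>v. Re (g v)) has_integral Gamma a * cos \<theta> powr (- a)) {0<..}"
  proof -
    have "(g has_integral Gamma (of_real a) * of_real (cos \<theta>) powr (- of_real a)) {0<..}"
      using absint_has[OF gi gv] .
    moreover have "complex_of_real (cos \<theta>) powr - complex_of_real a = of_real (cos \<theta> powr (- a))"
      using cth powr_of_real[of "cos \<theta>" "- a"] by simp
    ultimately have "(g has_integral of_real (Gamma a * cos \<theta> powr (- a))) {0<..}"
      by (simp add: Gamma_complex_of_real)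
    from has_integral_Re[OF this] show ?thesis by simp
  qed
  have nf: "norm (f v) = Re (g v)" if "v \<in> {0<..}" for v
  proof -
    have v: "v > 0" using that by simp
    have "norm (of_real v powr (\<xi> - 1)) = v powr (a - 1)"
      using v by (simp add: norm_powr_real_powr \<xi>_def)
    moreover have "norm (exp (- z * of_real v)) = exp (- cos \<theta> * v)"
      by (simp add: Rez)
    moreover have "of_real v powr (of_real a - 1) = (of_real (v powr (a - 1)) :: complex)"
      using v powr_of_real[of v "a - 1"] by simp
    moreover have "exp (- of_real (cos \<theta>) * of_real v) = (of_real (exp (- cos \<theta> * v)) :: complex)"
      by (simp add: exp_of_real[symmetric])
    ultimately show ?thesis
      by (simp add: f_def g_def norm_mult del: of_real_mult)
  qed
  have "norm (integral {0<..} f) \<le> Gamma a * cos \<theta> powr (- a)"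
  proof (rule integral_norm_bound_integral[of f "{0<..}" "\<lambda>v. Re (g v)", THEN order_trans])
    show "f integrable_on {0<..}" using fi set_lebesgue_integral_eq_integral(1) by blast
    show "(\<lambda>v. Re (g v)) integrable_on {0<..}" using gh by blast
    show "norm (f x) \<le> Re (g x)" if "x \<in> {0<..}" for x using nf[OF that] by simp
    show "integral {0<..} (\<lambda>v. Re (g v)) \<le> Gamma a * cos \<theta> powr (- a)"
      using gh by (simp add: integral_unique)
  qed
  moreover have "Gamma \<xi> = integral {0<..} f * z powr \<xi>"
    using z0 by (simp add: fv powr_minus)
  moreover have "norm (z powr \<xi>) = exp (- \<theta> * \<bar>t\<bar>)"
    using phi by (simp add: norm_powr_complex z_def Arg_cis \<xi>_def \<phi>_def)
  ultimately have "norm (Gamma \<xi>) \<le> Gamma a * cos \<theta> powr (- a) * exp (- \<theta> * \<bar>t\<bar>)"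
    by (simp add: norm_mult mult_right_mono)
  then show ?thesis by (simp add: \<xi>_def powr_minus divide_inverse)
qed

lemma gauss_int: "integrable lborel std_normal_density" "integral\<^sup>L lborel std_normal_density = 1"
  using integrable_std_normal_moment[of 0] integral_std_normal_moment_even[of 0] by simp_all

lemma gauss_ft_std:
  "(\<integral>x. std_normal_density x *\<^sub>R exp (\<i> * complex_of_real (\<theta> * x)) \<partial>lborel) = of_real (exp (- \<theta>\<^sup>2 / 2))"
proof -
  have "char std_normal_distribution \<theta> = of_real (exp (- \<theta>\<^sup>2 / 2))"
    by (simp add: char_std_normal_distribution)
  then show ?thesis
    unfolding char_def
    by (subst (asm) integral_density) (auto simp: normal_density_nonneg)
qed

lemma gauss_ft:
  fixes \<sigma> w :: real
  assumes s: "\<sigma> > 0"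
  shows "(\<integral>t. exp (\<i> * complex_of_real (t * w)) * of_real (exp (- (\<sigma> * t)\<^sup>2 / 2)) \<partial>lborel)
          = of_real (sqrt (2 * pi) / \<sigma> * exp (- (w / \<sigma>)\<^sup>2 / 2))"
proof -
  define f where "f x = std_normal_density x *\<^sub>R exp (\<i> * complex_of_real ((w / \<sigma>) * x))" for x
  have "integral\<^sup>L lborel f = \<bar>\<sigma>\<bar> *\<^sub>R (\<integral>t. f (0 + \<sigma> * t) \<partial>lborel)"
    using s by (intro lborel_integral_real_affine) simp
  moreover have "integral\<^sup>L lborel f = of_real (exp (- (w / \<sigma>)\<^sup>2 / 2))"
    unfolding f_def by (rule gauss_ft_std)
  moreover have "f (0 + \<sigma> * t) = of_real (1 / sqrt (2 * pi)) * (exp (\<i> * complex_of_real (t * w)) * of_real (exp (- (\<sigma> * t)\<^sup>2 / 2)))" for t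
    using s by (simp add: f_def std_normal_density_def scaleR_conv_of_real mult_ac)
  ultimately have "of_real (exp (- (w / \<sigma>)\<^sup>2 / 2)) = \<sigma> *\<^sub>R (of_real (1 / sqrt (2 * pi)) *
      (\<integral>t. exp (\<i> * complex_of_real (t * w)) * of_real (exp (- (\<sigma> * t)\<^sup>2 / 2)) \<partial>lborel))"
    using s by simp
  then show ?thesis
    using s by (simp add: scaleR_conv_of_real field_simps)
qed

lemma integrable_prod_bound:
  fixes F :: "real \<times> real \<Rightarrow> complex" and a b :: "real \<Rightarrow> real"
  assumes Fm: "F \<in> borel_measurable (lborel \<Otimes>\<^sub>M lborel)"
    and ai: "integrable lborel a" and bi: "integrable lborel b"
    and bnd: "\<And>x y. norm (F (x, y)) \<le> a x * b y"
  shows "integrable (lborel \<Otimes>\<^sub>M lborel) F"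
proof -
  interpret P: pair_sigma_finite lborel lborel ..
  have am[measurable]: "a \<in> borel_measurable borel" using borel_measurable_integrable[OF ai] by simp
  have bm[measurable]: "b \<in> borel_measurable borel" using borel_measurable_integrable[OF bi] by simp
  have "(\<integral>\<^sup>+ p. ennreal (norm (a (fst p)) * norm (b (snd p))) \<partial>(lborel \<Otimes>\<^sub>M lborel))
        = (\<integral>\<^sup>+ x. \<integral>\<^sup>+ y. ennreal (norm (a x)) * ennreal (norm (b y)) \<partial>lborel \<partial>lborel)"
    by (subst lborel.nn_integral_fst[symmetric]) (auto simp: ennreal_mult)
  also have "\<dots> = (\<integral>\<^sup>+ x. ennreal (norm (a x)) * (\<integral>\<^sup>+ y. ennreal (norm (b y)) \<partial>lborel) \<partial>lborel)"
    by (subst nn_integral_cmult) auto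
  also have "\<dots> = (\<integral>\<^sup>+ x. ennreal (norm (a x)) \<partial>lborel) * (\<integral>\<^sup>+ y. ennreal (norm (b y)) \<partial>lborel)"
    by (subst nn_integral_multc) auto
  also have "\<dots> < \<infinity>"
    using ai bi by (simp add: integrable_iff_bounded ennreal_mult_less_top)
  finally have "integrable (lborel \<Otimes>\<^sub>M lborel) (\<lambda>p. norm (a (fst p)) * norm (b (snd p)))"
    by (intro integrableI_bounded) (auto simp: norm_mult)
  then show ?thesis
  proof (rule Bochner_Integration.integrable_bound)
    show "F \<in> borel_measurable (lborel \<Otimes>\<^sub>M lborel)" by fact
    show "AE x in lborel \<Otimes>\<^sub>M lborel. norm (F x) \<le> norm (norm (a (fst x)) * norm (b (snd x)))"
    proof (intro AE_I2)
      fix p :: "real \<times> real"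
      have "norm (F p) \<le> a (fst p) * b (snd p)" using bnd[of "fst p" "snd p"] by simp
      also have "\<dots> \<le> norm (norm (a (fst p)) * norm (b (snd p)))" by (simp add: abs_mult[symmetric])
      finally show "norm (F p) \<le> norm (norm (a (fst p)) * norm (b (snd p)))" .
    qed
  qed
qed

lemma fourier_inv0:
  fixes h H :: "real \<Rightarrow> complex" and B :: real
  assumes hi: "integrable lborel h" and hb: "\<And>w. norm (h w) \<le> B" and hc: "isCont h 0"
    and Hd: "\<And>t. H t = (\<integral>w. exp (\<i> * complex_of_real (t * w)) * h w \<partial>lborel)"
    and Hi: "integrable lborel H"
  shows "(\<integral>t. H t \<partial>lborel) = of_real (2 * pi) * h 0"
proof -
  have hm[measurable]: "h \<in> borel_measurable borel" using borel_measurable_integrable[OF hi] by simp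
  have Hm[measurable]: "H \<in> borel_measurable borel" using borel_measurable_integrable[OF Hi] by simp
  define G where "G \<sigma> t = complex_of_real (exp (- (\<sigma> * t)\<^sup>2 / 2))" for \<sigma> t :: real
  have Gm[measurable]: "(\<lambda>t. G \<sigma> t) \<in> borel_measurable borel" for \<sigma> unfolding G_def by measurable
  have normG: "norm (G \<sigma> t) = exp (- (\<sigma> * t)\<^sup>2 / 2)" for \<sigma> t by (simp add: G_def)
  have gint: "integrable lborel (\<lambda>t. exp (- (\<sigma> * t)\<^sup>2 / 2))" if s: "\<sigma> > 0" for \<sigma> :: real
  proof -
    have "integrable lborel (\<lambda>t. std_normal_density (0 + \<sigma> * t))"
      using gauss_int(1) s by (subst lborel_integrable_real_affine_iff) auto
    then have "integrable lborel (\<lambda>t. sqrt (2 * pi) * std_normal_density (0 + \<sigma> * t))" by simp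
    then show ?thesis by (simp add: std_normal_density_def)
  qed
  have hnorm_int: "integrable lborel (\<lambda>w. norm (h w))" using hi by simp
  have claim1: "(\<integral>t. H t * G \<sigma> t \<partial>lborel) = of_real (sqrt (2 * pi)) * (\<integral>x. h (\<sigma> * x) * of_real (exp (- x\<^sup>2 / 2)) \<partial>lborel)"
    if s: "\<sigma> > 0" for \<sigma> :: real
  proof -
    define F where "F t w = exp (\<i> * complex_of_real (t * w)) * h w * G \<sigma> t" for t w
    have Fm: "case_prod F \<in> borel_measurable (lborel \<Otimes>\<^sub>M lborel)" unfolding F_def G_def by measurable
    have Fi: "integrable (lborel \<Otimes>\<^sub>M lborel) (case_prod F)"
    proof (rule integrable_prod_bound[OF Fm gint[OF s] hnorm_int])
      fix x y show "norm (case_prod F (x, y)) \<le> exp (- (\<sigma> * x)\<^sup>2 / 2) * norm (h y)"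
        by (simp add: F_def normG norm_mult)
    qed
    have "(\<integral>t. H t * G \<sigma> t \<partial>lborel) = (\<integral>t. (\<integral>w. F t w \<partial>lborel) \<partial>lborel)"
      by (simp add: Hd F_def)
    also have "\<dots> = (\<integral>w. (\<integral>t. F t w \<partial>lborel) \<partial>lborel)"
      using lborel_pair.Fubini_integral[OF Fi] by simp
    also have "\<dots> = (\<integral>w. h w * of_real (sqrt (2 * pi) / \<sigma> * exp (- (w / \<sigma>)\<^sup>2 / 2)) \<partial>lborel)"
    proof (rule Bochner_Integration.integral_cong[OF refl])
      fix w
      have "(\<integral>t. F t w \<partial>lborel) = h w * (\<integral>t. exp (\<i> * complex_of_real (t * w)) * G \<sigma> t \<partial>lborel)"
        unfolding F_def by (simp add: mult_ac)
      then show "(\<integral>t. F t w \<partial>lborel) = h w * of_real (sqrt (2 * pi) / \<sigma> * exp (- (w / \<sigma>)\<^sup>2 / 2))"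
        using gauss_ft[OF s, of w] by (simp add: G_def)
    qed
    also have "\<dots> = \<bar>\<sigma>\<bar> *\<^sub>R (\<integral>x. h (0 + \<sigma> * x) * of_real (sqrt (2 * pi) / \<sigma> * exp (- ((0 + \<sigma> * x) / \<sigma>)\<^sup>2 / 2)) \<partial>lborel)"
      using s by (intro lborel_integral_real_affine) simp
    also have "\<dots> = of_real (sqrt (2 * pi)) * (\<integral>x. h (\<sigma> * x) * of_real (exp (- x\<^sup>2 / 2)) \<partial>lborel)"
    proof -
      have "(\<lambda>x. h (0 + \<sigma> * x) * of_real (sqrt (2 * pi) / \<sigma> * exp (- ((0 + \<sigma> * x) / \<sigma>)\<^sup>2 / 2)))
          = (\<lambda>x. of_real (sqrt (2 * pi) / \<sigma>) * (h (\<sigma> * x) * of_real (exp (- x\<^sup>2 / 2))))"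
        using s by (auto simp: fun_eq_iff mult_ac)
      then show ?thesis using s by (simp add: scaleR_conv_of_real)
    qed
    finally show ?thesis .
  qed
  define sq where "sq n = 1 / (real n + 1)" for n :: nat
  have sq_pos: "sq n > 0" for n by (simp add: sq_def)
  have sq_lim: "sq \<longlonglongrightarrow> 0" unfolding sq_def using LIMSEQ_Suc[OF lim_inverse_n[where 'a=real]] by (simp add: inverse_eq_divide add.commute) 
  have claim2: "(\<lambda>n. \<integral>t. H t * G (sq n) t \<partial>lborel) \<longlonglongrightarrow> (\<integral>t. H t \<partial>lborel)"
  proof (rule integral_dominated_convergence[where w="\<lambda>t. norm (H t)"])
    show "(\<lambda>t. H t * G (sq n) t) \<in> borel_measurable lborel" for n by measurable
    show "H \<in> borel_measurable lborel" by measurable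
    show "integrable lborel (\<lambda>t. norm (H t))" using Hi by simp
    show "AE t in lborel. (\<lambda>n. H t * G (sq n) t) \<longlonglongrightarrow> H t"
    proof (intro AE_I2)
      fix t
      have "(\<lambda>n. G (sq n) t) \<longlonglongrightarrow> complex_of_real (exp (- (0 * t)\<^sup>2 / 2))"
        unfolding G_def by (intro tendsto_intros sq_lim) auto
      then have "(\<lambda>n. H t * G (sq n) t) \<longlonglongrightarrow> H t * 1" by (intro tendsto_intros) simp
      then show "(\<lambda>n. H t * G (sq n) t) \<longlonglongrightarrow> H t" by simp
    qed
    show "AE t in lborel. norm (H t * G (sq n) t) \<le> norm (H t)" for n
      by (intro AE_I2) (simp add: norm_mult normG mult_left_le)
  qed
  have claim3: "(\<lambda>n. \<integral>x. h (sq n * x) * of_real (exp (- x\<^sup>2 / 2)) \<partial>lborel) \<longlonglongrightarrow> (\<integral>x. h 0 * of_real (exp (- x\<^sup>2 / 2)) \<partial>lborel)"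
  proof (rule integral_dominated_convergence[where w="\<lambda>x. B * exp (- x\<^sup>2 / 2)"])
    show "(\<lambda>x. h (sq n * x) * of_real (exp (- x\<^sup>2 / 2))) \<in> borel_measurable lborel" for n by measurable
    show "(\<lambda>x. h 0 * of_real (exp (- x\<^sup>2 / 2))) \<in> borel_measurable lborel" by measurable
    show "integrable lborel (\<lambda>x. B * exp (- x\<^sup>2 / 2))"
      using gint[of 1] by simp
    show "AE x in lborel. (\<lambda>n. h (sq n * x) * of_real (exp (- x\<^sup>2 / 2))) \<longlonglongrightarrow> h 0 * of_real (exp (- x\<^sup>2 / 2))"
    proof (intro AE_I2)
      fix x
      have "(\<lambda>n. sq n * x) \<longlonglongrightarrow> 0 * x" by (intro tendsto_intros sq_lim)
      then have "(\<lambda>n. h (sq n * x)) \<longlonglongrightarrow> h 0"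
        using hc isCont_tendsto_compose[of 0 h "\<lambda>n. sq n * x" sequentially] by simp
      then show "(\<lambda>n. h (sq n * x) * of_real (exp (- x\<^sup>2 / 2))) \<longlonglongrightarrow> h 0 * of_real (exp (- x\<^sup>2 / 2))"
        by (intro tendsto_intros)
    qed
    show "AE x in lborel. norm (h (sq n * x) * of_real (exp (- x\<^sup>2 / 2))) \<le> B * exp (- x\<^sup>2 / 2)" for n
      by (intro AE_I2) (simp add: norm_mult hb mult_right_mono)
  qed
  have gauss_total: "(\<integral>x. exp (- x\<^sup>2 / 2) \<partial>lborel) = sqrt (2 * pi)"
  proof -
    have "(\<integral>x. exp (- x\<^sup>2 / 2) \<partial>lborel) = (\<integral>x. sqrt (2 * pi) * std_normal_density x \<partial>lborel)"
      by (simp add: std_normal_density_def)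
    also have "\<dots> = sqrt (2 * pi)" using gauss_int by simp
    finally show ?thesis .
  qed
  have "(\<lambda>n. \<integral>t. H t * G (sq n) t \<partial>lborel) \<longlonglongrightarrow> of_real (sqrt (2 * pi)) * (\<integral>x. h 0 * of_real (exp (- x\<^sup>2 / 2)) \<partial>lborel)"
    unfolding claim1[OF sq_pos] by (intro tendsto_intros claim3)
  moreover have "complex_of_real (sqrt (2 * pi)) * complex_of_real (sqrt (2 * pi)) = of_real (2 * pi)"
    by (simp only: of_real_mult[symmetric] real_sqrt_mult_self) (simp add: pi_gt_zero less_imp_le)
  ultimately show ?thesis
    using LIMSEQ_unique[OF claim2] gauss_total by (simp add: mult_ac)
qed

lemma pow_le_exp:
  fixes x :: real
  assumes "x \<ge> 0"
  shows "x ^ n / fact n \<le> exp x"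
proof -
  have "(\<lambda>k. x ^ k / fact k) sums exp x"
    using exp_converges[of x] by (simp add: divide_inverse scaleR_conv_of_real mult.commute)
  moreover have "sum (\<lambda>k. x ^ k / fact k) {n} \<le> suminf (\<lambda>k. x ^ k / fact k)"
    using assms \<open>(\<lambda>k. x ^ k / fact k) sums exp x\<close> by (intro sum_le_suminf) (auto simp: sums_iff)
  ultimately show ?thesis by (simp add: sums_iff)
qed

lemma absint_UNIV_lborel:
  fixes F :: "real \<Rightarrow> complex"
  assumes ai: "F absolutely_integrable_on UNIV" and m: "F \<in> borel_measurable borel"
  shows "integrable lborel F" "integral\<^sup>L lborel F = integral UNIV F"
proof -
  have il: "integrable lebesgue F" using ai by (simp add: set_integrable_def)
  then show "integrable lborel F" using m by (subst integrable_completion[symmetric]) auto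
  have "integral UNIV F = set_lebesgue_integral lebesgue UNIV F"
    using set_lebesgue_integral_eq_integral(2)[OF ai] by simp
  also have "\<dots> = integral\<^sup>L lebesgue F" by (simp add: set_lebesgue_integral_def)
  also have "\<dots> = integral\<^sup>L lborel F" using m by (subst integral_completion) auto
  finally show "integral\<^sup>L lborel F = integral UNIV F" by simp
qed

lemma exp_subst_gamma:
  fixes z \<xi> :: complex
  assumes z: "Re z > 0" and xi: "Re \<xi> > 0"
  shows "integrable lborel (\<lambda>w. exp (\<xi> * of_real w) * exp (- z * of_real (exp w)))"
    and "(\<integral>w. exp (\<xi> * of_real w) * exp (- z * of_real (exp w)) \<partial>lborel) = Gamma \<xi> * z powr (- \<xi>)"
proof -
  define f where "f v = of_real v powr (\<xi> - 1) * exp (- z * of_real v)" for v :: real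
  have fi: "f absolutely_integrable_on {0<..}" unfolding f_def by (rule gamma_scaled(1)[OF z xi])
  have fv: "integral {0<..} f = Gamma \<xi> * z powr (- \<xi>)" unfolding f_def by (rule gamma_scaled(2)[OF z xi])
  have img: "exp ` UNIV = ({0<..} :: real set)"
  proof -
    have "x \<in> exp ` UNIV" if "x > 0" for x :: real
      using that by (intro image_eqI[of _ _ "ln x"]) auto
    then show ?thesis by auto
  qed
  have eq: "\<bar>exp w\<bar> *\<^sub>R f (exp w) = exp (\<xi> * of_real w) * exp (- z * of_real (exp w))" for w :: real
  proof -
    have "of_real (exp w) powr (\<xi> - 1) = exp ((\<xi> - 1) * of_real w)"
      by (simp add: powr_def exp_of_real[symmetric] Ln_of_real)
    then have "of_real (exp w) * of_real (exp w) powr (\<xi> - 1) = exp (\<xi> * of_real w)"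
      by (simp add: exp_of_real[symmetric] exp_add[symmetric] algebra_simps)
    then show ?thesis by (simp add: f_def scaleR_conv_of_real mult.assoc[symmetric])
  qed
  have "(\<lambda>w. \<bar>exp w\<bar> *\<^sub>R f (exp w)) absolutely_integrable_on UNIV \<and>
        integral UNIV (\<lambda>w. \<bar>exp w\<bar> *\<^sub>R f (exp w)) = Gamma \<xi> * z powr (- \<xi>)"
    using fi fv unfolding img[symmetric]
    by (subst has_absolute_integral_change_of_variables_real[where g=exp and h=exp])
       (auto intro!: derivative_eq_intros inj_onI)
  then have A: "(\<lambda>w. exp (\<xi> * of_real w) * exp (- z * of_real (exp w))) absolutely_integrable_on UNIV"
     and B: "integral UNIV (\<lambda>w. exp (\<xi> * of_real w) * exp (- z * of_real (exp w))) = Gamma \<xi> * z powr (- \<xi>)"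
    unfolding eq by auto
  have m: "(\<lambda>w. exp (\<xi> * of_real w) * exp (- z * of_real (exp w))) \<in> borel_measurable borel"
    by (intro borel_measurable_continuous_onI continuous_intros)
  show "integrable lborel (\<lambda>w. exp (\<xi> * of_real w) * exp (- z * of_real (exp w)))"
    by (rule absint_UNIV_lborel(1)[OF A m])
  show "(\<integral>w. exp (\<xi> * of_real w) * exp (- z * of_real (exp w)) \<partial>lborel) = Gamma \<xi> * z powr (- \<xi>)"
    using absint_UNIV_lborel(2)[OF A m] B by simp
qed

lemma not_nonpos_Int_Re: "Re (x::complex) > 0 \<Longrightarrow> x \<notin> \<int>\<^sub>\<le>\<^sub>0"
  by (auto elim!: nonpos_Ints_cases)

lemma gamma_line_cont:
  fixes \<gamma> :: real and z :: complex
  assumes g: "\<gamma> > 0" and z0: "z \<noteq> 0"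
  shows "continuous_on UNIV (\<lambda>t. Gamma (Complex \<gamma> t) * z powr (- Complex \<gamma> t))"
proof -
  have "isCont (\<lambda>t. Gamma (Complex \<gamma> t) * z powr (- Complex \<gamma> t)) t" for t
  proof -
    have c: "isCont (\<lambda>t. Complex \<gamma> t) t" unfolding Complex_eq by (intro continuous_intros)
    have "isCont (\<lambda>t. Gamma (Complex \<gamma> t)) t"
      by (rule isCont_Gamma[OF c]) (rule not_nonpos_Int_Re, use g in simp)
    moreover have "isCont (\<lambda>t. exp (- Complex \<gamma> t * Ln z)) t"
      by (intro continuous_intros c)
    ultimately show ?thesis using z0 by (simp add: powr_def continuous_intros)
  qed
  then show ?thesis by (intro continuous_at_imp_continuous_on) auto
qed

lemma gamma_line_bound:
  fixes \<gamma> :: real and z :: complex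
  assumes g: "\<gamma> > 0" and z: "Re z > 0"
  obtains C c where "c > 0" "\<And>t. norm (Gamma (Complex \<gamma> t) * z powr (- Complex \<gamma> t)) \<le> C * exp (- c * \<bar>t\<bar>)"
proof -
  have z0: "z \<noteq> 0" using z by auto
  define A where "A = \<bar>Arg z\<bar>"
  have A: "A < pi / 2" "A \<ge> 0"
    using Re_Ln_pos_lt_imp[OF z] z0 by (auto simp: A_def Arg_eq_Im_Ln)
  define \<theta> where "\<theta> = (pi / 2 + A) / 2"
  have th: "0 \<le> \<theta>" "\<theta> < pi / 2" using A by (auto simp: \<theta>_def)
  define C where "C = Gamma \<gamma> / cos \<theta> powr \<gamma> * norm z powr (- \<gamma>)"
  define c where "c = \<theta> - A"
  have c: "c > 0" using A by (simp add: c_def \<theta>_def)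
  have "norm (Gamma (Complex \<gamma> t) * z powr (- Complex \<gamma> t)) \<le> C * exp (- c * \<bar>t\<bar>)" for t
  proof -
    have n1: "norm (Gamma (Complex \<gamma> t)) \<le> Gamma \<gamma> / cos \<theta> powr \<gamma> * exp (- \<theta> * \<bar>t\<bar>)"
      by (rule gamma_decay[OF g th])
    have n2: "norm (z powr (- Complex \<gamma> t)) = norm z powr (- \<gamma>) * exp (t * Arg z)"
      by (simp add: norm_powr_complex)
    have "t * Arg z \<le> \<bar>t\<bar> * A" unfolding A_def by (metis abs_ge_self abs_mult)
    then have n3: "exp (- \<theta> * \<bar>t\<bar>) * exp (t * Arg z) \<le> exp (- c * \<bar>t\<bar>)"
      by (simp add: exp_add[symmetric] c_def algebra_simps)
    have "norm (Gamma (Complex \<gamma> t) * z powr (- Complex \<gamma> t))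
        = norm (Gamma (Complex \<gamma> t)) * (norm z powr (- \<gamma>) * exp (t * Arg z))"
      by (simp add: norm_mult n2)
    also have "\<dots> \<le> Gamma \<gamma> / cos \<theta> powr \<gamma> * exp (- \<theta> * \<bar>t\<bar>) * (norm z powr (- \<gamma>) * exp (t * Arg z))"
      by (intro mult_right_mono n1) auto
    also have "\<dots> = C * (exp (- \<theta> * \<bar>t\<bar>) * exp (t * Arg z))"
      by (simp add: C_def mult_ac)
    also have "\<dots> \<le> C * exp (- c * \<bar>t\<bar>)"
    proof (rule mult_left_mono[OF n3])
      have "cos \<theta> > 0" using th by (intro cos_gt_zero_pi) auto
      then show "C \<ge> 0" using g by (simp add: C_def Gamma_real_pos less_imp_le)
    qed
    finally show ?thesis .
  qed
  then show ?thesis using c that by blast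
qed

lemma gamma_line_integrable:
  fixes \<gamma> :: real and z :: complex
  assumes g: "\<gamma> > 0" and z: "Re z > 0"
  shows "integrable lborel (\<lambda>t. Gamma (Complex \<gamma> t) * z powr (- Complex \<gamma> t))"
proof -
  obtain C c where c: "c > 0" and b: "\<And>t. norm (Gamma (Complex \<gamma> t) * z powr (- Complex \<gamma> t)) \<le> C * exp (- c * \<bar>t\<bar>)"
    using gamma_line_bound[OF g z] by blast
  have z0: "z \<noteq> 0" using z by auto
  have "integrable lborel (\<lambda>t. C * exp (- c * \<bar>t\<bar>))"
    using integrable_exp_abs[OF c] by simp
  then show ?thesis
  proof (rule Bochner_Integration.integrable_bound)
    show "(\<lambda>t. Gamma (Complex \<gamma> t) * z powr (- Complex \<gamma> t)) \<in> borel_measurable lborel"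
      using borel_measurable_continuous_onI[OF gamma_line_cont[OF g z0]] by simp
    show "AE t in lborel. norm (Gamma (Complex \<gamma> t) * z powr (- Complex \<gamma> t)) \<le> norm (C * exp (- c * \<bar>t\<bar>))"
      using b by (intro AE_I2) (metis abs_ge_self order_trans real_norm_def)
  qed
qed

lemma h_bound:
  fixes \<gamma> a :: real
  assumes g: "\<gamma> > 0" and a: "a > 0"
  shows "exp (\<gamma> * w) * exp (- a * exp w) \<le> 1 + fact (nat \<lceil>\<gamma>\<rceil>) / a ^ (nat \<lceil>\<gamma>\<rceil>)"
proof -
  define N where "N = nat \<lceil>\<gamma>\<rceil>"
  define v where "v = exp w"
  have v: "v > 0" by (simp add: v_def)
  have e: "exp (\<gamma> * w) = v powr \<gamma>" by (simp add: v_def powr_def)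
  have p: "v powr \<gamma> \<le> 1 + v ^ N"
  proof (cases "v \<le> 1")
    case True
    then have "v powr \<gamma> \<le> 1" using v g by (intro powr_le1) auto
    then show ?thesis by (smt (verit) v zero_le_power)
  next
    case False
    have "real N = of_int \<lceil>\<gamma>\<rceil>" using g unfolding N_def by (intro of_nat_nat) simp
    then have "\<gamma> \<le> real N" by (simp add: le_of_int_ceiling)
    then have "v powr \<gamma> \<le> v powr real N" using False by (intro powr_mono) auto
    also have "\<dots> = v ^ N" using v by (simp add: powr_realpow)
    finally show ?thesis by simp
  qed
  have q: "v ^ N * exp (- a * v) \<le> fact N / a ^ N"
  proof -
    have "(a * v) ^ N / fact N \<le> exp (a * v)" using a v by (intro pow_le_exp) auto
    then have "a ^ N * v ^ N \<le> fact N * exp (a * v)"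
      by (simp add: power_mult_distrib field_simps)
    then have "v ^ N \<le> fact N / a ^ N * exp (a * v)" using a by (simp add: field_simps)
    then show ?thesis by (simp add: exp_minus field_simps)
  qed
  have "exp (\<gamma> * w) * exp (- a * exp w) = v powr \<gamma> * exp (- a * v)"
    by (simp add: e v_def)
  also have "\<dots> \<le> (1 + v ^ N) * exp (- a * v)"
    by (intro mult_right_mono p) simp
  also have "\<dots> = exp (- a * v) + v ^ N * exp (- a * v)" by (simp add: algebra_simps)
  also have "\<dots> \<le> 1 + fact N / a ^ N"
  proof (intro add_mono q)
    show "exp (- a * v) \<le> 1" using a v by simp
  qed
  finally show ?thesis by (simp add: N_def)
qed

lemma cahen_mellin:
  fixes \<gamma> :: real and z :: complex
  assumes g: "\<gamma> > 0" and z: "Re z > 0"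
  shows "(\<integral>t. Gamma (Complex \<gamma> t) * z powr (- Complex \<gamma> t) \<partial>lborel) = of_real (2 * pi) * exp (- z)"
proof -
  define h where "h w = exp (of_real \<gamma> * of_real w) * exp (- z * of_real (exp w))" for w :: real
  define H where "H t = Gamma (Complex \<gamma> t) * z powr (- Complex \<gamma> t)" for t :: real
  have hi: "integrable lborel h" unfolding h_def by (rule exp_subst_gamma(1)[OF z]) (use g in simp)
  define B where "B = 1 + fact (nat \<lceil>\<gamma>\<rceil>) / Re z ^ (nat \<lceil>\<gamma>\<rceil>)"
  have hb: "norm (h w) \<le> B" for w
  proof -
    have "norm (h w) = exp (\<gamma> * w) * exp (- Re z * exp w)"
      by (simp add: h_def norm_mult)
    also have "\<dots> \<le> B" unfolding B_def by (rule h_bound[OF g z])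
    finally show ?thesis .
  qed
  have hc: "isCont h 0" unfolding h_def by (intro continuous_intros)
  have Hd: "H t = (\<integral>w. exp (\<i> * complex_of_real (t * w)) * h w \<partial>lborel)" for t
  proof -
    have xi: "Re (Complex \<gamma> t) > 0" using g by simp
    have "(\<lambda>w. exp (\<i> * complex_of_real (t * w)) * h w) = (\<lambda>w. exp (Complex \<gamma> t * of_real w) * exp (- z * of_real (exp w)))"
      by (auto simp: fun_eq_iff h_def Complex_eq exp_add[symmetric] algebra_simps)
    then show ?thesis using exp_subst_gamma(2)[OF z xi] by (simp add: H_def)
  qed
  have Hi: "integrable lborel H" unfolding H_def by (rule gamma_line_integrable[OF g z])
  have "(\<integral>t. H t \<partial>lborel) = of_real (2 * pi) * h 0"
    by (rule fourier_inv0[OF hi hb hc Hd Hi])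
  then show ?thesis by (simp add: H_def h_def)
qed

lemma absint_lborel_set:
  fixes g :: "real \<Rightarrow> complex"
  assumes ai: "g absolutely_integrable_on S" and m: "(\<lambda>u. indicator S u *\<^sub>R g u) \<in> borel_measurable borel"
  shows "integrable lborel (\<lambda>u. indicator S u *\<^sub>R g u)" "integral\<^sup>L lborel (\<lambda>u. indicator S u *\<^sub>R g u) = integral S g"
proof -
  have il: "integrable lebesgue (\<lambda>u. indicator S u *\<^sub>R g u)" using ai by (simp add: set_integrable_def)
  then show "integrable lborel (\<lambda>u. indicator S u *\<^sub>R g u)" using m by (subst integrable_completion[symmetric]) auto
  have "integral S g = set_lebesgue_integral lebesgue S g"
    using set_lebesgue_integral_eq_integral(2)[OF ai] by simp
  also have "\<dots> = integral\<^sup>L lebesgue (\<lambda>u. indicator S u *\<^sub>R g u)" by (simp add: set_lebesgue_integral_def)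
  also have "\<dots> = integral\<^sup>L lborel (\<lambda>u. indicator S u *\<^sub>R g u)" using m by (subst integral_completion) auto
  finally show "integral\<^sup>L lborel (\<lambda>u. indicator S u *\<^sub>R g u) = integral S g" by simp
qed

lemma branch_eq:
  fixes K B \<xi> :: complex and \<alpha> :: real
  assumes K: "Re K > 0" and B0: "B \<noteq> 0" and Ba: "\<alpha> / 2 * \<bar>Im (Ln B)\<bar> < pi / 2" and a: "\<alpha> > 0"
  shows "(K * B powr of_real (- \<alpha> / 2)) powr (- \<xi>) = K powr (- \<xi>) * B powr (of_real (\<alpha> / 2) * \<xi>)"
proof -
  define w where "w = B powr of_real (- \<alpha> / 2)"
  have w: "w = exp (- of_real (\<alpha> / 2) * Ln B)" using B0 by (simp add: w_def powr_def)
  have w0: "w \<noteq> 0" by (simp add: w)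
  have imw: "Im (- of_real (\<alpha> / 2) * Ln B) = - (\<alpha> / 2) * Im (Ln B)" by simp
  have "\<bar>- (\<alpha> / 2) * Im (Ln B)\<bar> < pi / 2" using Ba a by (simp add: abs_mult)
  then have Lw: "Ln w = - of_real (\<alpha> / 2) * Ln B"
    unfolding w by (intro Ln_exp) (auto simp: imw)
  have K0: "K \<noteq> 0" using K by auto
  have LK: "\<bar>Im (Ln K)\<bar> < pi / 2" by (rule Re_Ln_pos_lt_imp[OF K])
  have "\<bar>Im (Ln w)\<bar> < pi / 2" using \<open>\<bar>- (\<alpha> / 2) * Im (Ln B)\<bar> < pi / 2\<close> by (simp add: Lw)
  then have LKw: "Ln (K * w) = Ln K + Ln w"
    using LK by (intro Ln_times_simple K0 w0) auto
  have Kw0: "K * w \<noteq> 0" using K0 w0 by simp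
  have "(K * w) powr (- \<xi>) = exp (- \<xi> * Ln K + (of_real (\<alpha> / 2) * \<xi>) * Ln B)"
    using Kw0 by (simp add: powr_def LKw Lw algebra_simps)
  also have "\<dots> = K powr (- \<xi>) * B powr (of_real (\<alpha> / 2) * \<xi>)"
    using K0 B0 by (simp add: powr_def exp_add[symmetric])
  finally show ?thesis by (simp add: w_def)
qed

lemma powr_pos_exp: "v > 0 \<Longrightarrow> complex_of_real v powr w = exp (w * of_real (ln v))"
  by (simp add: powr_def Ln_of_real)

lemma fox_identity:
  fixes \<alpha> :: real and B K :: complex
  assumes a: "\<alpha> > 2" and B: "Re B > 0" and Ba: "\<alpha> / 2 * \<bar>Im (Ln B)\<bar> < pi / 2" and K: "Re K > 0"
  shows "set_integrable lborel {0<..} (\<lambda>u. exp (- B * of_real u) * exp (- K * of_real (u powr (\<alpha> / 2))))"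
    and "B * set_lebesgue_integral lborel {0<..} (\<lambda>u. exp (- B * of_real u) * exp (- K * of_real (u powr (\<alpha> / 2))))
         = foxH11 \<alpha> (K * B powr of_real (- \<alpha> / 2))"
proof -
  define \<gamma> where "\<gamma> = 1 / \<alpha>"
  have g: "\<gamma> > 0" using a by (simp add: \<gamma>_def)
  define \<xi> where "\<xi> t = Complex \<gamma> t" for t
  define c where "c = complex_of_real (\<alpha> / 2)"
  have Re_cxi: "Re (c * \<xi> t) = 1 / 2" for t using a by (simp add: c_def \<xi>_def \<gamma>_def)
  have Re1: "Re (1 - c * \<xi> t) > 0" for t using Re_cxi[of t] by simp
  have B0: "B \<noteq> 0" using B by auto
  have K0: "K \<noteq> 0" using K by auto
  define A where "A t = Gamma (\<xi> t) * K powr (- \<xi> t)" for t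
  define F where "F t u = indicator {0<..} u *\<^sub>R (A t * (of_real u powr ((1 - c * \<xi> t) - 1) * exp (- B * of_real u)))" for t u :: real
  have Acont: "continuous_on UNIV A"
    unfolding A_def \<xi>_def by (rule gamma_line_cont[OF g K0])
  define G where "G p = A (fst p) * (exp (((1 - c * \<xi> (fst p)) - 1) * of_real (ln (snd p))) * exp (- B * of_real (snd p)))" for p :: "real \<times> real"
  have Gcont: "continuous_on (UNIV \<times> {0<..}) G"
  proof -
    have "continuous_on (UNIV \<times> {0<..}) (\<lambda>p::real\<times>real. A (fst p))"
      by (rule continuous_on_compose2[OF Acont]) (auto intro: continuous_intros)
    moreover have "continuous_on (UNIV \<times> {0<..}) (\<lambda>p::real\<times>real. ln (snd p))"
      by (intro continuous_intros) auto
    ultimately show ?thesis unfolding G_def \<xi>_def Complex_eq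
      by (intro continuous_intros) auto
  qed
  have FG: "case_prod F = (\<lambda>p. indicator (UNIV \<times> {0<..}) p *\<^sub>R G p)"
    by (auto simp: fun_eq_iff F_def G_def indicator_def powr_pos_exp)
  have Fm: "case_prod F \<in> borel_measurable (lborel \<Otimes>\<^sub>M lborel)"
    unfolding FG lborel_prod
    using borel_measurable_continuous_on_indicator[OF _ Gcont]
    by (simp add: borel_open open_Times)
  define b where "b u = indicator {0<..} u * (u powr (- 1 / 2) * exp (- Re B * u))" for u :: real
  define g0 where "g0 v = of_real v powr (complex_of_real (1 / 2) - 1) * exp (- of_real (Re B) * of_real v)" for v :: real
  have g0i: "g0 absolutely_integrable_on {0<..}" unfolding g0_def by (rule gamma_scaled(1)) (use B in auto)
  have g0m: "(\<lambda>u. indicator {0<..} u *\<^sub>R g0 u) \<in> borel_measurable borel"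
  proof (rule borel_measurable_continuous_on_indicator)
    show "continuous_on {0<..} g0"
    proof (rule continuous_on_eq)
      show "continuous_on {0<..} (\<lambda>v::real. exp ((complex_of_real (1 / 2) - 1) * of_real (ln v)) * exp (- of_real (Re B) * of_real v))"
        by (intro continuous_intros) auto
      show "\<And>x. x \<in> {0<..} \<Longrightarrow> exp ((complex_of_real (1 / 2) - 1) * of_real (ln x)) * exp (- of_real (Re B) * of_real x) = g0 x"
        by (simp add: g0_def powr_pos_exp)
    qed
  qed simp
  have bi: "integrable lborel b"
  proof -
    have "integrable lborel (\<lambda>u. norm (indicator {0<..} u *\<^sub>R g0 u))"
      using integrable_norm[OF absint_lborel_set(1)[OF g0i g0m]] by simp
    moreover have "norm (indicator {0<..} u *\<^sub>R g0 u) = b u" for u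
      by (cases "u > 0") (auto simp: b_def g0_def norm_mult norm_powr_real_powr indicator_def)
    ultimately show ?thesis by simp
  qed
  have ai: "integrable lborel (\<lambda>t. norm (A t))"
    using gamma_line_integrable[OF g K] unfolding A_def \<xi>_def by simp
  have Fi: "integrable (lborel \<Otimes>\<^sub>M lborel) (case_prod F)"
  proof (rule integrable_prod_bound[OF Fm ai bi])
    fix t u :: real
    show "norm (case_prod F (t, u)) \<le> norm (A t) * b u"
    proof (cases "u > 0")
      case True
      have e: "Re ((1 - c * \<xi> t) - 1) = - 1 / 2" using Re_cxi[of t] by simp
      have "norm (of_real u powr ((1 - c * \<xi> t) - 1)) = u powr Re ((1 - c * \<xi> t) - 1)"
        using True by (subst norm_powr_real_powr) auto
      then have "norm (of_real u powr ((1 - c * \<xi> t) - 1)) = u powr (- 1 / 2)" by (simp only: e)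
      then show ?thesis using True by (simp add: F_def b_def norm_mult indicator_def)
    qed (simp add: F_def b_def)
  qed
  have inner_u: "(\<integral>u. F t u \<partial>lborel) = A t * (Gamma (1 - c * \<xi> t) * B powr (- (1 - c * \<xi> t)))" for t
  proof -
    define gt where "gt u = of_real u powr ((1 - c * \<xi> t) - 1) * exp (- B * of_real u)" for u :: real
    have gti: "gt absolutely_integrable_on {0<..}" unfolding gt_def by (rule gamma_scaled(1)[OF B Re1])
    have gtv: "integral {0<..} gt = Gamma (1 - c * \<xi> t) * B powr (- (1 - c * \<xi> t))"
      unfolding gt_def by (rule gamma_scaled(2)[OF B Re1])
    have gtm: "(\<lambda>u. indicator {0<..} u *\<^sub>R gt u) \<in> borel_measurable borel"
    proof (rule borel_measurable_continuous_on_indicator)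
      show "continuous_on {0<..} gt"
      proof (rule continuous_on_eq)
        show "continuous_on {0<..} (\<lambda>v::real. exp (((1 - c * \<xi> t) - 1) * of_real (ln v)) * exp (- B * of_real v))"
          by (intro continuous_intros) auto
        show "\<And>x. x \<in> {0<..} \<Longrightarrow> exp (((1 - c * \<xi> t) - 1) * of_real (ln x)) * exp (- B * of_real x) = gt x"
          by (simp add: gt_def powr_pos_exp)
      qed
    qed simp
    have feq: "(\<lambda>u. F t u) = (\<lambda>u. A t * (indicator {0<..} u *\<^sub>R gt u))"
      by (auto simp: F_def gt_def indicator_def fun_eq_iff)
    have "(\<integral>u. F t u \<partial>lborel) = (\<integral>u. A t * (indicator {0<..} u *\<^sub>R gt u) \<partial>lborel)"
      by (simp only: feq)
    also have "\<dots> = A t * (\<integral>u. indicator {0<..} u *\<^sub>R gt u \<partial>lborel)"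
      by (rule integral_mult_right_zero)
    also have "\<dots> = A t * integral {0<..} gt" using absint_lborel_set(2)[OF gti gtm] by simp
    finally show ?thesis using gtv by simp
  qed
  define f where "f u = exp (- B * of_real u) * exp (- K * of_real (u powr (\<alpha> / 2)))" for u :: real
  have inner_t: "(\<integral>t. F t u \<partial>lborel) = indicator {0<..} u *\<^sub>R (of_real (2 * pi) * f u)" for u
  proof (cases "u > 0")
    case False
    then show ?thesis by (simp add: F_def)
  next
    case True
    define z where "z = K * of_real (u powr (\<alpha> / 2))"
    have z: "Re z > 0" using K True by (simp add: z_def)
    have eq: "F t u = exp (- B * of_real u) * (Gamma (Complex \<gamma> t) * z powr (- Complex \<gamma> t))" for t
    proof -
      have "z powr (- \<xi> t) = of_real (u powr (\<alpha> / 2)) powr (- \<xi> t) * K powr (- \<xi> t)"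
        unfolding z_def by (subst mult.commute) (rule powr_times_real_left, auto)
      also have "of_real (u powr (\<alpha> / 2)) powr (- \<xi> t) = of_real u powr ((1 - c * \<xi> t) - 1)"
        using True by (simp add: powr_pos_exp ln_powr c_def algebra_simps)
      finally have "z powr (- \<xi> t) = of_real u powr ((1 - c * \<xi> t) - 1) * K powr (- \<xi> t)" .
      then show ?thesis using True
        by (simp add: F_def A_def \<xi>_def indicator_def mult_ac)
    qed
    have "(\<integral>t. F t u \<partial>lborel) = exp (- B * of_real u) * (\<integral>t. Gamma (Complex \<gamma> t) * z powr (- Complex \<gamma> t) \<partial>lborel)"
      unfolding eq by simp
    also have "\<dots> = exp (- B * of_real u) * (of_real (2 * pi) * exp (- z))"
      using cahen_mellin[OF g z] by simp
    finally show ?thesis using True by (simp add: f_def z_def indicator_def mult_ac)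
  qed
  have Fub: "(\<integral>u. (\<integral>t. F t u \<partial>lborel) \<partial>lborel) = (\<integral>t. (\<integral>u. F t u \<partial>lborel) \<partial>lborel)"
    by (rule lborel_pair.Fubini_integral[OF Fi])
  have Fsnd: "integrable lborel (\<lambda>u. \<integral>t. F t u \<partial>lborel)"
    by (rule lborel_pair.integrable_snd[OF Fi])
  then have "integrable lborel (\<lambda>u. of_real (2 * pi) * (indicator {0<..} u *\<^sub>R f u))"
    unfolding inner_t by (simp add: mult_ac)
  then have "integrable lborel (\<lambda>u. (1 / of_real (2 * pi)) * (of_real (2 * pi) * (indicator {0<..} u *\<^sub>R f u)))"
    by (rule integrable_mult_right)
  then have fint: "integrable lborel (\<lambda>u. indicator {0<..} u *\<^sub>R f u)" by simp
  then show "set_integrable lborel {0<..} (\<lambda>u. exp (- B * of_real u) * exp (- K * of_real (u powr (\<alpha> / 2))))"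
    by (simp add: set_integrable_def f_def)
  define y where "y = K * B powr of_real (- \<alpha> / 2)"
  have y0: "y \<noteq> 0" using K0 B0 by (simp add: y_def powr_def)
  define fox where "fox t = Gamma (mb_line \<alpha> t) * Gamma (1 - complex_of_real (\<alpha> / 2) * mb_line \<alpha> t) * y powr - mb_line \<alpha> t" for t
  have fox_eq: "(\<integral>u. F t u \<partial>lborel) = fox t / B" for t
  proof -
    have ml: "mb_line \<alpha> t = \<xi> t" by (simp add: mb_line_def \<xi>_def \<gamma>_def)
    have br: "y powr (- \<xi> t) = K powr (- \<xi> t) * B powr (c * \<xi> t)"
      unfolding y_def c_def by (rule branch_eq[OF K B0 Ba]) (use a in simp)
    have bp: "B powr (- (1 - c * \<xi> t)) = B powr (c * \<xi> t) / B"
    proof -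
      have "B powr (- (1 - c * \<xi> t)) = B powr (c * \<xi> t - 1)" by (simp add: algebra_simps)
      also have "\<dots> = B powr (c * \<xi> t) / B powr 1" by (rule powr_diff)
      finally show ?thesis by simp
    qed
    show ?thesis unfolding inner_u fox_def ml bp br
      by (simp add: A_def c_def field_simps)
  qed
  have "(\<integral>t. fox t \<partial>lborel) = B * (\<integral>t. (\<integral>u. F t u \<partial>lborel) \<partial>lborel)"
    using B0 unfolding fox_eq by simp
  also have "\<dots> = B * (\<integral>u. indicator {0<..} u *\<^sub>R (of_real (2 * pi) * f u) \<partial>lborel)"
    unfolding Fub[symmetric] inner_t ..
  also have "\<dots> = B * (of_real (2 * pi) * set_lebesgue_integral lborel {0<..} f)"
  proof -
    have "(\<lambda>u. indicator {0<..} u *\<^sub>R (of_real (2 * pi) * f u)) = (\<lambda>u. of_real (2 * pi) * (indicator {0<..} u *\<^sub>R f u))"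
      by (auto simp: fun_eq_iff indicator_def)
    then have "(\<integral>u. indicator {0<..} u *\<^sub>R (of_real (2 * pi) * f u) \<partial>lborel) = of_real (2 * pi) * (\<integral>u. indicator {0<..} u *\<^sub>R f u \<partial>lborel)"
      by (simp only: integral_mult_right_zero)
    then show ?thesis by (simp add: set_lebesgue_integral_def)
  qed
  finally have fx: "(\<integral>t. fox t \<partial>lborel) = B * (of_real (2 * pi) * set_lebesgue_integral lborel {0<..} f)" .
  have "foxH11 \<alpha> y = (1 / (2 * pi)) *\<^sub>R (\<integral>t. fox t \<partial>lborel)"
    using y0 by (simp add: foxH11_def fox_def)
  also have "\<dots> = B * set_lebesgue_integral lborel {0<..} f"
    unfolding fx by (simp add: scaleR_conv_of_real field_simps)
  finally have "foxH11 \<alpha> y = B * set_lebesgue_integral lborel {0<..} f" .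
  moreover have "f = (\<lambda>u. exp (- B * of_real u) * exp (- K * of_real (u powr (\<alpha> / 2))))"
    by (simp add: fun_eq_iff f_def)
  ultimately show "B * set_lebesgue_integral lborel {0<..} (\<lambda>u. exp (- B * of_real u) * exp (- K * of_real (u powr (\<alpha> / 2))))
         = foxH11 \<alpha> (K * B powr of_real (- \<alpha> / 2))"
    by (simp add: y_def)
qed

lemma dd_alt: "dist_density c lb x = (if 0 \<le> x then 2 * (c * lb * pi) * x * exp (- (c * lb * pi) * x\<^sup>2) else 0)"
  by (simp add: dist_density_def mult_ac)

lemma dd_nonneg: "c > 0 \<Longrightarrow> lb > 0 \<Longrightarrow> dist_density c lb x \<ge> 0"
  by (simp add: dist_density_def)

lemma dd_meas[measurable]: "dist_density c lb \<in> borel_measurable borel"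
  unfolding dist_density_def by measurable

lemma dd_cdf:
  fixes a :: real
  assumes a: "a > 0"
  shows "(\<integral>y. indicator {..x} y * (if 0 \<le> y then 2 * a * y * exp (- a * y\<^sup>2) else 0) \<partial>lborel)
         = (if 0 \<le> x then 1 - exp (- a * x\<^sup>2) else 0)"
proof (cases "0 \<le> x")
  case False
  then have "(\<lambda>y. indicator {..x} y * (if 0 \<le> y then 2 * a * y * exp (- a * y\<^sup>2) else 0)) = (\<lambda>y. 0::real)"
    by (auto simp: indicator_def fun_eq_iff)
  then show ?thesis using False by (simp only:) simp
next
  case True
  have "indicator {..x} y * (if 0 \<le> y then 2 * a * y * exp (- a * y\<^sup>2) else 0) = indicator {0..x} y *\<^sub>R (2 * a * y * exp (- a * y\<^sup>2))" for y
    by (auto simp: indicator_def)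
  then have "(\<integral>y. indicator {..x} y * (if 0 \<le> y then 2 * a * y * exp (- a * y\<^sup>2) else 0) \<partial>lborel)
      = (\<integral>y. indicator {0..x} y *\<^sub>R (2 * a * y * exp (- a * y\<^sup>2)) \<partial>lborel)" by simp
  also have "\<dots> = (- exp (- a * x\<^sup>2)) - (- exp (- a * 0\<^sup>2))"
  proof (rule integral_FTC_atLeastAtMost[OF True])
    fix y :: real
    show "((\<lambda>y. - exp (- a * y\<^sup>2)) has_vector_derivative 2 * a * y * exp (- a * y\<^sup>2)) (at y within {0..x})"
      by (auto intro!: derivative_eq_intros simp: has_real_derivative_iff_has_vector_derivative[symmetric])
    show "continuous_on {0..x} (\<lambda>y. 2 * a * y * exp (- a * y\<^sup>2))"
      by (intro continuous_intros)
  qed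
  finally show ?thesis using True by simp
qed

lemma max_expect:
  fixes M :: "'a measure" and d1 d2 :: "'a \<Rightarrow> real" and c lb :: real and \<Phi> :: "real \<Rightarrow> complex"
  assumes c: "c > 0" and lb: "lb > 0" and PS: "prob_space M"
    and D1: "distributed M lborel d1 (\<lambda>x. ennreal (dist_density c lb x))"
    and D2: "distributed M lborel d2 (\<lambda>x. ennreal (dist_density c lb x))"
    and I: "prob_space.indep_var M borel d1 borel d2"
    and \<Phi>m[measurable]: "\<Phi> \<in> borel_measurable borel" and \<Phi>b: "\<And>x. norm (\<Phi> x) \<le> 1"
  shows "(LINT w|M. \<Phi> (max (d1 w) (d2 w))) =
     (\<integral>x. of_real (2 * dist_density c lb x * (if 0 \<le> x then 1 - exp (- (c * lb * pi) * x\<^sup>2) else 0)) * \<Phi> x \<partial>lborel)"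
proof -
  interpret prob_space M by (rule PS)
  define p where "p = dist_density c lb"
  define a where "a = c * lb * pi"
  have a: "a > 0" using c lb by (simp add: a_def)
  have pm[measurable]: "p \<in> borel_measurable borel" unfolding p_def by (rule dd_meas)
  have p0: "p x \<ge> 0" for x unfolding p_def using c lb by (rule dd_nonneg)
  have I': "indep_var lborel d1 lborel d2"
    using I unfolding indep_var_def indep_vars_def by (simp add: bool.case_eq_if)
  have sfl: "sigma_finite_measure lborel" by unfold_locales
  have J: "distributed M (lborel \<Otimes>\<^sub>M lborel) (\<lambda>w. (d1 w, d2 w)) (\<lambda>(x, y). ennreal (p x) * ennreal (p y))"
    unfolding p_def by (rule distributed_joint_indep[OF sfl sfl D1 D2 I'])
  have pint: "integrable lborel p"
    using distributed_integrable[OF D1, of "\<lambda>x. 1"] p0 unfolding p_def by simp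
  define g where "g z = \<Phi> (max (fst z) (snd z))" for z :: "real \<times> real"
  have gm[measurable]: "g \<in> borel_measurable (lborel \<Otimes>\<^sub>M lborel)" unfolding g_def by measurable
  have "(LINT w|M. \<Phi> (max (d1 w) (d2 w))) = integral\<^sup>L (distr M (lborel \<Otimes>\<^sub>M lborel) (\<lambda>w. (d1 w, d2 w))) g"
    by (subst integral_distr[OF distributed_measurable[OF J] gm]) (simp add: g_def)
  also have "\<dots> = integral\<^sup>L (density (lborel \<Otimes>\<^sub>M lborel) (\<lambda>z. ennreal (p (fst z) * p (snd z)))) g"
  proof -
    have "(\<lambda>(x, y). ennreal (p x) * ennreal (p y)) = (\<lambda>z. ennreal (p (fst z) * p (snd z)))"
      using p0 by (auto simp: fun_eq_iff ennreal_mult)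
    then show ?thesis using distributed_distr_eq_density[OF J] by simp
  qed
  also have "\<dots> = (\<integral>z. (p (fst z) * p (snd z)) *\<^sub>R g z \<partial>(lborel \<Otimes>\<^sub>M lborel))"
    by (subst integral_density) (auto simp: p0)
  finally have E1: "(LINT w|M. \<Phi> (max (d1 w) (d2 w))) = (\<integral>z. (p (fst z) * p (snd z)) *\<^sub>R g z \<partial>(lborel \<Otimes>\<^sub>M lborel))" .
  define Fc where "Fc x = (if 0 \<le> x then 1 - exp (- a * x\<^sup>2) else 0)" for x :: real
  have cdf1: "(\<integral>y. indicator {..x} y * p y \<partial>lborel) = Fc x" for x
    unfolding p_def dd_alt Fc_def a_def[symmetric] by (rule dd_cdf[OF a])
  have cdf2: "(\<integral>y. indicator {..<x} y * p y \<partial>lborel) = Fc x" for x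
  proof -
    have "(\<integral>y. indicator {..<x} y * p y \<partial>lborel) = (\<integral>y. indicator {..x} y * p y \<partial>lborel)"
    proof (rule integral_cong_AE)
      show "AE y in lborel. indicator {..<x} y * p y = indicator {..x} y * p y"
        using AE_lborel_singleton[of x] by eventually_elim (auto simp: indicator_def)
    qed auto
    then show ?thesis using cdf1 by simp
  qed
  define H1 where "H1 x y = (if y \<le> x then of_real (p x * p y) * \<Phi> x else 0)" for x y :: real
  define H2 where "H2 x y = (if x < y then of_real (p x * p y) * \<Phi> y else 0)" for x y :: real
  have H1m: "case_prod H1 \<in> borel_measurable (lborel \<Otimes>\<^sub>M lborel)" unfolding H1_def by measurable
  have H2m: "case_prod H2 \<in> borel_measurable (lborel \<Otimes>\<^sub>M lborel)" unfolding H2_def by measurable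
  have H1i: "integrable (lborel \<Otimes>\<^sub>M lborel) (case_prod H1)"
  proof (rule integrable_prod_bound[OF H1m pint pint])
    fix x y show "norm (case_prod H1 (x, y)) \<le> p x * p y"
      using \<Phi>b[of x] p0[of x] p0[of y] by (auto simp: H1_def norm_mult intro: mult_left_le)
  qed
  have H2i: "integrable (lborel \<Otimes>\<^sub>M lborel) (case_prod H2)"
  proof (rule integrable_prod_bound[OF H2m pint pint])
    fix x y show "norm (case_prod H2 (x, y)) \<le> p x * p y"
      using \<Phi>b[of y] p0[of x] p0[of y] by (auto simp: H2_def norm_mult intro: mult_left_le)
  qed
  have Hsplit: "(\<lambda>z. (p (fst z) * p (snd z)) *\<^sub>R g z) = (\<lambda>z. case_prod H1 z + case_prod H2 z)"
    by (auto simp: fun_eq_iff H1_def H2_def g_def max_def scaleR_conv_of_real)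
  have int1: "(\<integral>z. case_prod H1 z \<partial>(lborel \<Otimes>\<^sub>M lborel)) = (\<integral>x. of_real (p x * Fc x) * \<Phi> x \<partial>lborel)"
  proof -
    have "(\<integral>z. case_prod H1 z \<partial>(lborel \<Otimes>\<^sub>M lborel)) = (\<integral>x. (\<integral>y. H1 x y \<partial>lborel) \<partial>lborel)"
      using lborel_pair.integral_fst[OF H1i] by simp
    also have "\<dots> = (\<integral>x. of_real (p x * Fc x) * \<Phi> x \<partial>lborel)"
    proof (rule Bochner_Integration.integral_cong[OF refl])
      fix x
      have feq: "(\<lambda>y. H1 x y) = (\<lambda>y. (of_real (p x) * \<Phi> x) * of_real (indicator {..x} y * p y))"
        by (auto simp: fun_eq_iff H1_def indicator_def)
      have "(\<integral>y. H1 x y \<partial>lborel) = (\<integral>y. (of_real (p x) * \<Phi> x) * of_real (indicator {..x} y * p y) \<partial>lborel)"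
        by (simp only: feq)
      also have "\<dots> = (of_real (p x) * \<Phi> x) * (\<integral>y. of_real (indicator {..x} y * p y) \<partial>lborel)"
        by (rule integral_mult_right_zero)
      finally have "(\<integral>y. H1 x y \<partial>lborel) = (of_real (p x) * \<Phi> x) * of_real (\<integral>y. indicator {..x} y * p y \<partial>lborel)"
        by (simp only: integral_complex_of_real)
      then show "(\<integral>y. H1 x y \<partial>lborel) = of_real (p x * Fc x) * \<Phi> x"
        by (simp add: cdf1)
    qed
    finally show ?thesis .
  qed
  have int2: "(\<integral>z. case_prod H2 z \<partial>(lborel \<Otimes>\<^sub>M lborel)) = (\<integral>x. of_real (p x * Fc x) * \<Phi> x \<partial>lborel)"
  proof -
    have "(\<integral>z. case_prod H2 z \<partial>(lborel \<Otimes>\<^sub>M lborel)) = (\<integral>y. (\<integral>x. H2 x y \<partial>lborel) \<partial>lborel)"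
      using lborel_pair.integral_snd[OF H2i] by simp
    also have "\<dots> = (\<integral>y. of_real (p y * Fc y) * \<Phi> y \<partial>lborel)"
    proof (rule Bochner_Integration.integral_cong[OF refl])
      fix y
      have feq: "(\<lambda>x. H2 x y) = (\<lambda>x. (of_real (p y) * \<Phi> y) * of_real (indicator {..<y} x * p x))"
        by (auto simp: fun_eq_iff H2_def indicator_def)
      have "(\<integral>x. H2 x y \<partial>lborel) = (\<integral>x. (of_real (p y) * \<Phi> y) * of_real (indicator {..<y} x * p x) \<partial>lborel)"
        by (simp only: feq)
      also have "\<dots> = (of_real (p y) * \<Phi> y) * (\<integral>x. of_real (indicator {..<y} x * p x) \<partial>lborel)"
        by (rule integral_mult_right_zero)
      finally have "(\<integral>x. H2 x y \<partial>lborel) = (of_real (p y) * \<Phi> y) * of_real (\<integral>x. indicator {..<y} x * p x \<partial>lborel)"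
        by (simp only: integral_complex_of_real)
      then show "(\<integral>x. H2 x y \<partial>lborel) = of_real (p y * Fc y) * \<Phi> y"
        by (simp add: cdf2)
    qed
    finally show ?thesis .
  qed
  have "(LINT w|M. \<Phi> (max (d1 w) (d2 w))) = (\<integral>z. case_prod H1 z \<partial>(lborel \<Otimes>\<^sub>M lborel)) + (\<integral>z. case_prod H2 z \<partial>(lborel \<Otimes>\<^sub>M lborel))"
    unfolding E1 Hsplit by (rule Bochner_Integration.integral_add[OF H1i H2i])
  also have "\<dots> = (\<integral>x. of_real (p x * Fc x) * \<Phi> x \<partial>lborel) + (\<integral>x. of_real (p x * Fc x) * \<Phi> x \<partial>lborel)"
    unfolding int1 int2 ..
  also have "\<dots> = (\<integral>x. 2 * (of_real (p x * Fc x) * \<Phi> x) \<partial>lborel)"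
    by simp
  also have "\<dots> = (\<integral>x. of_real (2 * dist_density c lb x * (if 0 \<le> x then 1 - exp (- (c * lb * pi) * x\<^sup>2) else 0)) * \<Phi> x \<partial>lborel)"
    by (rule Bochner_Integration.integral_cong) (auto simp: p_def Fc_def a_def)
  finally show ?thesis .
qed

lemma abs_arctan_mono: "\<bar>x\<bar> \<le> \<bar>y\<bar> \<Longrightarrow> \<bar>arctan x\<bar> \<le> \<bar>arctan y\<bar>"
proof -
  have e: "\<bar>arctan z\<bar> = arctan \<bar>z\<bar>" for z
    by (cases "z \<ge> 0") (auto simp: arctan_minus zero_le_arctan_iff arctan_less_zero_iff)
  assume "\<bar>x\<bar> \<le> \<bar>y\<bar>"
  then show ?thesis unfolding e by (simp add: arctan_le_iff)
qed

lemma B_arg: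
  fixes s :: complex and \<alpha> r \<rho> t :: real
  assumes s: "Re s > 0" and a: "\<alpha> > 2" and r: "r > 0" and rho: "\<rho> > 0" and t: "t > 0"
  defines "B \<equiv> of_real t * (of_real r + of_real \<rho> * s powr of_real (2 / \<alpha>))"
  shows "Re B > 0" and "\<alpha> / 2 * \<bar>Im (Ln B)\<bar> < pi / 2"
proof -
  define w where "w = s powr of_real (2 / \<alpha>)"
  have s0: "s \<noteq> 0" using s by auto
  have As: "\<bar>Im (Ln s)\<bar> < pi / 2" by (rule Re_Ln_pos_lt_imp[OF s])
  have w: "w = exp (of_real (2 / \<alpha>) * Ln s)" using s0 by (simp add: w_def powr_def)
  have imw: "Im (of_real (2 / \<alpha>) * Ln s) = 2 / \<alpha> * Im (Ln s)" by simp
  have "\<bar>2 / \<alpha> * Im (Ln s)\<bar> = 2 / \<alpha> * \<bar>Im (Ln s)\<bar>" using a by (simp add: abs_mult)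
  also have "\<dots> < 2 / \<alpha> * (pi / 2)" using a As by (intro mult_strict_left_mono) auto
  finally have Aw0: "\<bar>2 / \<alpha> * Im (Ln s)\<bar> < pi / \<alpha>" by simp
  have pa: "pi / \<alpha> < pi / 2" using a by (intro divide_strict_left_mono) auto
  have bb: "- (pi / \<alpha>) < 2 / \<alpha> * Im (Ln s) \<and> 2 / \<alpha> * Im (Ln s) < pi / \<alpha>"
    using Aw0 by (simp only: abs_less_iff) auto
  have pa0: "pi / \<alpha> > 0" using a by simp
  have b1: "- pi < Im (of_real (2 / \<alpha>) * Ln s)" unfolding imw using bb pa pa0 by linarith
  have b2: "Im (of_real (2 / \<alpha>) * Ln s) \<le> pi" unfolding imw using bb pa pa0 by linarith
  have Lw: "Ln w = of_real (2 / \<alpha>) * Ln s"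
    unfolding w using b1 b2 by (rule Ln_exp)
  have Aw: "\<bar>Im (Ln w)\<bar> < pi / \<alpha>" using Aw0 by (simp add: Lw)
  have Rew: "Re w > 0"
  proof -
    have "Re w = exp (Re (of_real (2 / \<alpha>) * Ln s)) * cos (2 / \<alpha> * Im (Ln s))"
      by (simp add: w Re_exp)
    moreover have "cos (2 / \<alpha> * Im (Ln s)) > 0"
      using bb pa pa0 by (intro cos_gt_zero_pi) linarith+
    ultimately show ?thesis by simp
  qed
  define z where "z = of_real r + of_real \<rho> * w"
  have Rez: "Re z > 0" using r rho Rew by (simp add: z_def add_pos_pos)
  have z0: "z \<noteq> 0" using Rez by auto
  have Bz: "B = of_real t * z" by (simp add: B_def z_def w_def)
  show "Re B > 0" using t Rez by (simp add: Bz)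
  have LB: "Im (Ln B) = Im (Ln z)" using t z0 by (simp add: Bz Ln_times_of_real)
  have w0: "w \<noteq> 0" using Rew by auto
  have "\<bar>Im (Ln z)\<bar> = \<bar>arctan (Im z / Re z)\<bar>"
    using arg_conv_arctan[OF Rez] Arg_eq_Im_Ln[OF z0] by simp
  also have "\<dots> \<le> \<bar>arctan (Im w / Re w)\<bar>"
  proof (rule abs_arctan_mono)
    have "\<bar>Im z / Re z\<bar> = \<rho> * \<bar>Im w\<bar> / (r + \<rho> * Re w)"
      using r rho Rew by (simp add: z_def abs_mult abs_divide)
    also have "\<dots> \<le> \<rho> * \<bar>Im w\<bar> / (\<rho> * Re w)"
      using r rho Rew by (intro divide_left_mono) (auto intro!: mult_pos_pos add_pos_pos)
    also have "\<dots> = \<bar>Im w / Re w\<bar>" using rho Rew by (simp add: abs_divide)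
    finally show "\<bar>Im z / Re z\<bar> \<le> \<bar>Im w / Re w\<bar>" .
  qed
  also have "\<dots> = \<bar>Im (Ln w)\<bar>"
    using arg_conv_arctan[OF Rew] Arg_eq_Im_Ln[OF w0] by simp
  finally have "\<bar>Im (Ln B)\<bar> < pi / \<alpha>" using Aw LB by simp
  then show "\<alpha> / 2 * \<bar>Im (Ln B)\<bar> < pi / 2"
    using a by (simp add: field_simps)
qed

lemma laplace_fox:
  fixes \<alpha> :: real and B K :: complex
  assumes a: "\<alpha> > 2" and B: "Re B > 0" and Ba: "\<alpha> / 2 * \<bar>Im (Ln B)\<bar> < pi / 2" and K: "Re K > 0 \<or> K = 0"
  shows "set_integrable lborel {0<..} (\<lambda>u. exp (- B * of_real u) * exp (- K * of_real (u powr (\<alpha> / 2))))"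
    and "set_lebesgue_integral lborel {0<..} (\<lambda>u. exp (- B * of_real u) * exp (- K * of_real (u powr (\<alpha> / 2))))
         = foxH11 \<alpha> (K * B powr of_real (- \<alpha> / 2)) / B"
proof -
  have B0: "B \<noteq> 0" using B by auto
  have "set_integrable lborel {0<..} (\<lambda>u. exp (- B * of_real u) * exp (- K * of_real (u powr (\<alpha> / 2)))) \<and>
        set_lebesgue_integral lborel {0<..} (\<lambda>u. exp (- B * of_real u) * exp (- K * of_real (u powr (\<alpha> / 2))))
         = foxH11 \<alpha> (K * B powr of_real (- \<alpha> / 2)) / B"
  proof (cases "K = 0")
    case False
    then have K': "Re K > 0" using K by auto
    show ?thesis using fox_identity[OF a B Ba K'] B0 by (simp add: field_simps)
  next
    case True
    define g where "g v = of_real v powr (1 - 1) * exp (- B * of_real v)" for v :: real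
    have gi: "g absolutely_integrable_on {0<..}" unfolding g_def by (rule gamma_scaled(1)[OF B]) simp
    have gv: "integral {0<..} g = Gamma 1 * B powr (- 1)" unfolding g_def by (rule gamma_scaled(2)[OF B]) simp
    have geq: "indicator {0<..} u *\<^sub>R g u = indicator {0<..} u *\<^sub>R (exp (- B * of_real u) * exp (- K * of_real (u powr (\<alpha> / 2))))" for u
      by (auto simp: g_def True indicator_def)
    have gm: "(\<lambda>u. indicator {0<..} u *\<^sub>R g u) \<in> borel_measurable borel"
      unfolding geq True by measurable
    have "integrable lborel (\<lambda>u. indicator {0<..} u *\<^sub>R g u)" by (rule absint_lborel_set(1)[OF gi gm])
    moreover have "integral\<^sup>L lborel (\<lambda>u. indicator {0<..} u *\<^sub>R g u) = 1 / B"
      using absint_lborel_set(2)[OF gi gm] gv by (simp add: powr_minus divide_inverse)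
    ultimately show ?thesis
      unfolding set_integrable_def set_lebesgue_integral_def geq using True by (simp add: foxH11_def)
  qed
  then show "set_integrable lborel {0<..} (\<lambda>u. exp (- B * of_real u) * exp (- K * of_real (u powr (\<alpha> / 2))))"
    and "set_lebesgue_integral lborel {0<..} (\<lambda>u. exp (- B * of_real u) * exp (- K * of_real (u powr (\<alpha> / 2))))
         = foxH11 \<alpha> (K * B powr of_real (- \<alpha> / 2)) / B" by auto
qed

lemma subst_sq:
  fixes h :: "real \<Rightarrow> complex"
  assumes hi: "set_integrable lborel {0<..} h" and hc: "continuous_on {0<..} h"
  shows "set_integrable lborel {0<..} (\<lambda>x. of_real (2 * x) * h (x\<^sup>2))"
    and "set_lebesgue_integral lborel {0<..} (\<lambda>x. of_real (2 * x) * h (x\<^sup>2)) = set_lebesgue_integral lborel {0<..} h"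
proof -
  have hm: "(\<lambda>x. indicator {0<..} x *\<^sub>R h x) \<in> borel_measurable lborel"
    using hi unfolding set_integrable_def by (rule borel_measurable_integrable)
  have hl: "h absolutely_integrable_on {0<..}"
    using hi hm unfolding set_integrable_def by (simp add: integrable_completion)
  have hv: "integral {0<..} h = set_lebesgue_integral lborel {0<..} h"
  proof -
    have "integral {0<..} h = set_lebesgue_integral lebesgue {0<..} h"
      using set_lebesgue_integral_eq_integral(2)[OF hl] by simp
    also have "\<dots> = set_lebesgue_integral lborel {0<..} h"
      unfolding set_lebesgue_integral_def using hm by (simp add: integral_completion)
    finally show ?thesis .
  qed
  have img: "(\<lambda>x. x\<^sup>2) ` {0<..} = ({0<..} :: real set)"
  proof -
    have "x \<in> (\<lambda>x. x\<^sup>2) ` {0<..}" if "x > 0" for x :: real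
      using that by (intro image_eqI[of _ _ "sqrt x"]) auto
    then show ?thesis by auto
  qed
  have inj: "inj_on (\<lambda>x::real. x\<^sup>2) {0<..}"
    by (auto intro!: inj_onI simp: power2_eq_iff)
  have cov: "(\<lambda>x. \<bar>2 * x\<bar> *\<^sub>R h (x\<^sup>2)) absolutely_integrable_on {0<..} \<and>
        integral {0<..} (\<lambda>x. \<bar>2 * x\<bar> *\<^sub>R h (x\<^sup>2)) = b
     \<longleftrightarrow> h absolutely_integrable_on (\<lambda>x. x\<^sup>2) ` {0<..} \<and> integral ((\<lambda>x. x\<^sup>2) ` {0<..}) h = b" for b
    by (rule has_absolute_integral_change_of_variables_real[where g="\<lambda>x. x\<^sup>2" and h="\<lambda>x. 2 * x"])
       (auto intro!: derivative_eq_intros inj)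
  have "(\<lambda>x. \<bar>2 * x\<bar> *\<^sub>R h (x\<^sup>2)) absolutely_integrable_on {0<..} \<and>
        integral {0<..} (\<lambda>x. \<bar>2 * x\<bar> *\<^sub>R h (x\<^sup>2)) = integral {0<..} h"
    using hl unfolding cov img by simp
  then have A: "(\<lambda>x. of_real (2 * x) * h (x\<^sup>2)) absolutely_integrable_on {0<..}"
    and Bv: "integral {0<..} (\<lambda>x. of_real (2 * x) * h (x\<^sup>2)) = integral {0<..} h"
  proof -
    assume *: "(\<lambda>x. \<bar>2 * x\<bar> *\<^sub>R h (x\<^sup>2)) absolutely_integrable_on {0<..} \<and>
        integral {0<..} (\<lambda>x. \<bar>2 * x\<bar> *\<^sub>R h (x\<^sup>2)) = integral {0<..} h"
    have eq: "\<bar>2 * x\<bar> *\<^sub>R h (x\<^sup>2) = of_real (2 * x) * h (x\<^sup>2)" if "x \<in> {0<..}" for x :: real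
      using that by (simp add: scaleR_conv_of_real)
    show "(\<lambda>x. of_real (2 * x) * h (x\<^sup>2)) absolutely_integrable_on {0<..}"
    proof (rule absolutely_integrable_spike[OF _ negligible_empty])
      show "(\<lambda>x. \<bar>2 * x\<bar> *\<^sub>R h (x\<^sup>2)) absolutely_integrable_on {0<..}" using * by blast
      show "\<And>x. x \<in> {0<..} - {} \<Longrightarrow> of_real (2 * x) * h (x\<^sup>2) = \<bar>2 * x\<bar> *\<^sub>R h (x\<^sup>2)"
        using eq by simp
    qed
    show "integral {0<..} (\<lambda>x. of_real (2 * x) * h (x\<^sup>2)) = integral {0<..} h"
      using * eq by (metis (no_types, lifting) integral_cong)
  qed
  have cm: "(\<lambda>x. indicator {0<..} x *\<^sub>R (of_real (2 * x) * h (x\<^sup>2))) \<in> borel_measurable borel"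
  proof (rule borel_measurable_continuous_on_indicator)
    show "continuous_on {0<..} (\<lambda>x::real. of_real (2 * x) * h (x\<^sup>2))"
      by (intro continuous_intros continuous_on_compose2[OF hc]) auto
  qed simp
  show "set_integrable lborel {0<..} (\<lambda>x. of_real (2 * x) * h (x\<^sup>2))"
    unfolding set_integrable_def by (rule absint_lborel_set(1)[OF A cm])
  show "set_lebesgue_integral lborel {0<..} (\<lambda>x. of_real (2 * x) * h (x\<^sup>2)) = set_lebesgue_integral lborel {0<..} h"
    unfolding set_lebesgue_integral_def using absint_lborel_set(2)[OF A cm] Bv hv
    by (simp add: set_lebesgue_integral_def)
qed

lemma Re_spowr_pos:
  fixes s :: complex and \<alpha> :: real
  assumes s: "Re s > 0" and a: "\<alpha> > 2"
  shows "Re (s powr of_real (2 / \<alpha>)) > 0"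
proof -
  have s0: "s \<noteq> 0" using s by auto
  have As: "\<bar>Im (Ln s)\<bar> < pi / 2" by (rule Re_Ln_pos_lt_imp[OF s])
  have "\<bar>2 / \<alpha> * Im (Ln s)\<bar> = 2 / \<alpha> * \<bar>Im (Ln s)\<bar>" using a by (simp add: abs_mult)
  also have "\<dots> < 2 / \<alpha> * (pi / 2)" using a As by (intro mult_strict_left_mono) auto
  finally have Aw0: "\<bar>2 / \<alpha> * Im (Ln s)\<bar> < pi / \<alpha>" by simp
  have pa: "pi / \<alpha> < pi / 2" using a by (intro divide_strict_left_mono) auto
  have pa0: "pi / \<alpha> > 0" using a by simp
  have bb: "- (pi / \<alpha>) < 2 / \<alpha> * Im (Ln s) \<and> 2 / \<alpha> * Im (Ln s) < pi / \<alpha>"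
    using Aw0 by (simp only: abs_less_iff) auto
  have "Re (s powr of_real (2 / \<alpha>)) = exp (Re (of_real (2 / \<alpha>) * Ln s)) * cos (2 / \<alpha> * Im (Ln s))"
    using s0 by (simp add: powr_def Re_exp)
  moreover have "cos (2 / \<alpha> * Im (Ln s)) > 0"
    using bb pa pa0 by (intro cos_gt_zero_pi) linarith+
  ultimately show ?thesis by simp
qed

lemma main_closed:
  fixes M :: "'a measure" and d1 d2 :: "'a \<Rightarrow> real"
    and c \<alpha> lb q \<omega> :: real and s :: complex
  assumes c: "c > 0" and a: "\<alpha> > 2" and lb: "lb > 0" and q: "q \<ge> 0" and om: "\<omega> > 0"
    and PS: "prob_space M"
    and D1: "distributed M lborel d1 (\<lambda>x. ennreal (dist_density c lb x))"
    and D2: "distributed M lborel d2 (\<lambda>x. ennreal (dist_density c lb x))"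
    and I: "prob_space.indep_var M borel d1 borel d2"
    and s: "Re s > 0"
  shows
    "(LINT w|M. exp (- of_real (q * (max (d1 w) (d2 w)) powr \<alpha>) * s
                     - of_real (pi * lb * \<omega> * (max (d1 w) (d2 w))\<^sup>2) * s powr of_real (2 / \<alpha>)))
     = of_real (2 * c) / (of_real c + of_real \<omega> * s powr of_real (2 / \<alpha>))
         * foxH11 \<alpha> (of_real q * s
             * (of_real (pi * lb) * (of_real c + of_real \<omega> * s powr of_real (2 / \<alpha>))) powr of_real (- \<alpha> / 2))
       - of_real (2 * c) / (of_real (2 * c) + of_real \<omega> * s powr of_real (2 / \<alpha>))
         * foxH11 \<alpha> (of_real q * s
             * (of_real (pi * lb) * (of_real (2 * c) + of_real \<omega> * s powr of_real (2 / \<alpha>))) powr of_real (- \<alpha> / 2))"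
proof -
  define w where "w = s powr of_real (2 / \<alpha>)"
  have Rew: "Re w > 0" unfolding w_def by (rule Re_spowr_pos[OF s a])
  define K where "K = of_real q * s"
  have K: "Re K > 0 \<or> K = 0" using q s by (cases "q = 0") (auto simp: K_def)
  define a0 where "a0 = c * lb * pi"
  have a0: "a0 > 0" using c lb by (simp add: a0_def)
  define \<Phi> where "\<Phi> x = exp (- of_real (q * x powr \<alpha>) * s - of_real (pi * lb * \<omega> * x\<^sup>2) * w)" for x :: real
  have \<Phi>m: "\<Phi> \<in> borel_measurable borel" unfolding \<Phi>_def by measurable
  have \<Phi>b: "norm (\<Phi> x) \<le> 1" for x
  proof -
    have "0 \<le> q * x powr \<alpha> * Re s" using q s by simp
    moreover have "0 \<le> pi * lb * \<omega> * x\<^sup>2 * Re w" using lb om Rew by simp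
    ultimately show ?thesis by (simp add: \<Phi>_def)
  qed
  have E: "(LINT w|M. \<Phi> (max (d1 w) (d2 w))) =
     (\<integral>x. of_real (2 * dist_density c lb x * (if 0 \<le> x then 1 - exp (- (c * lb * pi) * x\<^sup>2) else 0)) * \<Phi> x \<partial>lborel)"
    by (rule max_expect[OF c lb PS D1 D2 I \<Phi>m \<Phi>b])
  define B1 where "B1 = of_real (pi * lb) * (of_real c + of_real \<omega> * w)"
  define B2 where "B2 = of_real (pi * lb) * (of_real (2 * c) + of_real \<omega> * w)"
  have B1: "Re B1 > 0" "\<alpha> / 2 * \<bar>Im (Ln B1)\<bar> < pi / 2"
    using B_arg[OF s a c om, of "pi * lb"] lb unfolding B1_def w_def by auto
  have B2: "Re B2 > 0" "\<alpha> / 2 * \<bar>Im (Ln B2)\<bar> < pi / 2"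
    using B_arg[OF s a _ om, of "2 * c" "pi * lb"] c lb unfolding B2_def w_def by auto
  define h where "h B u = exp (- B * of_real u) * exp (- K * of_real (u powr (\<alpha> / 2)))" for B :: complex and u :: real
  have hc: "continuous_on {0<..} (h B)" for B
    unfolding h_def by (intro continuous_intros) auto
  have L1: "set_integrable lborel {0<..} (h B1)" "set_lebesgue_integral lborel {0<..} (h B1) = foxH11 \<alpha> (K * B1 powr of_real (- \<alpha> / 2)) / B1"
    using laplace_fox[OF a B1 K] unfolding h_def by auto
  have L2: "set_integrable lborel {0<..} (h B2)" "set_lebesgue_integral lborel {0<..} (h B2) = foxH11 \<alpha> (K * B2 powr of_real (- \<alpha> / 2)) / B2"
    using laplace_fox[OF a B2 K] unfolding h_def by auto
  have S1: "set_integrable lborel {0<..} (\<lambda>x. of_real (2 * x) * h B1 (x\<^sup>2))"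
     "set_lebesgue_integral lborel {0<..} (\<lambda>x. of_real (2 * x) * h B1 (x\<^sup>2)) = set_lebesgue_integral lborel {0<..} (h B1)"
    using subst_sq[OF L1(1) hc] by auto
  have S2: "set_integrable lborel {0<..} (\<lambda>x. of_real (2 * x) * h B2 (x\<^sup>2))"
     "set_lebesgue_integral lborel {0<..} (\<lambda>x. of_real (2 * x) * h B2 (x\<^sup>2)) = set_lebesgue_integral lborel {0<..} (h B2)"
    using subst_sq[OF L2(1) hc] by auto
  have hx: "h B1 (x\<^sup>2) = of_real (exp (- (a0 * x\<^sup>2))) * \<Phi> x \<and> h B2 (x\<^sup>2) = of_real (exp (- (2 * a0 * x\<^sup>2))) * \<Phi> x" if x: "x > 0" for x :: real
  proof -
    have xp: "(x\<^sup>2) powr (\<alpha> / 2) = x powr \<alpha>"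
    proof -
      have "x powr 2 = x\<^sup>2" using x by simp
      then have "(x\<^sup>2) powr (\<alpha> / 2) = (x powr 2) powr (\<alpha> / 2)" by simp
      also have "\<dots> = x powr (2 * (\<alpha> / 2))" by (rule powr_powr)
      finally show ?thesis by simp
    qed
    have e1: "h B1 (x\<^sup>2) = exp (- B1 * of_real (x\<^sup>2) + - K * of_real (x powr \<alpha>))"
      unfolding h_def xp by (simp only: exp_add)
    have e2: "h B2 (x\<^sup>2) = exp (- B2 * of_real (x\<^sup>2) + - K * of_real (x powr \<alpha>))"
      unfolding h_def xp by (simp only: exp_add)
    have f1: "of_real (exp (- (a0 * x\<^sup>2))) * \<Phi> x = exp (- of_real (a0 * x\<^sup>2) + (- of_real (q * x powr \<alpha>) * s - of_real (pi * lb * \<omega> * x\<^sup>2) * w))"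
      unfolding \<Phi>_def exp_of_real[symmetric] of_real_minus by (simp only: exp_add)
    have f2: "of_real (exp (- (2 * a0 * x\<^sup>2))) * \<Phi> x = exp (- of_real (2 * a0 * x\<^sup>2) + (- of_real (q * x powr \<alpha>) * s - of_real (pi * lb * \<omega> * x\<^sup>2) * w))"
      unfolding \<Phi>_def exp_of_real[symmetric] of_real_minus by (simp only: exp_add)
    show ?thesis unfolding e1 e2 f1 f2
      by (simp add: B1_def B2_def K_def a0_def algebra_simps)
  qed
  define C where "C = complex_of_real (2 * a0)"
  have pw: "of_real (2 * dist_density c lb x * (if 0 \<le> x then 1 - exp (- (c * lb * pi) * x\<^sup>2) else 0)) * \<Phi> x
      = C * (indicator {0<..} x *\<^sub>R (of_real (2 * x) * h B1 (x\<^sup>2))) - C * (indicator {0<..} x *\<^sub>R (of_real (2 * x) * h B2 (x\<^sup>2)))" for x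
  proof (cases "x > 0")
    case True
    have d: "dist_density c lb x = 2 * a0 * x * exp (- (a0 * x\<^sup>2))"
      using True by (simp add: dist_density_def a0_def mult_ac)
    have f: "exp (- (c * lb * pi) * x\<^sup>2) = exp (- (a0 * x\<^sup>2))" by (simp add: a0_def mult_ac)
    define E where "E = exp (- (a0 * x\<^sup>2))"
    have ee: "exp (- (2 * a0 * x\<^sup>2)) = E * E"
      by (simp add: E_def exp_add[symmetric])
    have h1: "h B1 (x\<^sup>2) = of_real E * \<Phi> x" and h2: "h B2 (x\<^sup>2) = of_real (E * E) * \<Phi> x"
      using hx[OF True] unfolding ee E_def by auto
    show ?thesis using True unfolding d f h1 h2 E_def[symmetric]
      by (simp add: C_def algebra_simps)
  next
    case False
    then show ?thesis by (auto simp: dist_density_def)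
  qed
  have I1: "integrable lborel (\<lambda>x. indicator {0<..} x *\<^sub>R (of_real (2 * x) * h B1 (x\<^sup>2)))"
    using S1(1) by (simp add: set_integrable_def)
  have I2: "integrable lborel (\<lambda>x. indicator {0<..} x *\<^sub>R (of_real (2 * x) * h B2 (x\<^sup>2)))"
    using S2(1) by (simp add: set_integrable_def)
  have "(LINT w|M. \<Phi> (max (d1 w) (d2 w)))
      = (\<integral>x. C * (indicator {0<..} x *\<^sub>R (of_real (2 * x) * h B1 (x\<^sup>2))) - C * (indicator {0<..} x *\<^sub>R (of_real (2 * x) * h B2 (x\<^sup>2))) \<partial>lborel)"
    unfolding E pw ..
  also have "\<dots> = C * (\<integral>x. indicator {0<..} x *\<^sub>R (of_real (2 * x) * h B1 (x\<^sup>2)) \<partial>lborel)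
                 - C * (\<integral>x. indicator {0<..} x *\<^sub>R (of_real (2 * x) * h B2 (x\<^sup>2)) \<partial>lborel)"
  proof -
    have J1: "integrable lborel (\<lambda>x. C * (indicator {0<..} x *\<^sub>R (of_real (2 * x) * h B1 (x\<^sup>2))))"
      by (intro integrable_mult_right) (rule I1)
    have J2: "integrable lborel (\<lambda>x. C * (indicator {0<..} x *\<^sub>R (of_real (2 * x) * h B2 (x\<^sup>2))))"
      by (intro integrable_mult_right) (rule I2)
    show ?thesis
      by (simp only: Bochner_Integration.integral_diff[OF J1 J2] integral_mult_right_zero)
  qed
  also have "\<dots> = C * (foxH11 \<alpha> (K * B1 powr of_real (- \<alpha> / 2)) / B1) - C * (foxH11 \<alpha> (K * B2 powr of_real (- \<alpha> / 2)) / B2)"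
    using S1(2) S2(2) L1(2) L2(2) by (simp add: set_lebesgue_integral_def)
  also have "\<dots> = of_real (2 * c) / (of_real c + of_real \<omega> * w) * foxH11 \<alpha> (K * B1 powr of_real (- \<alpha> / 2))
       - of_real (2 * c) / (of_real (2 * c) + of_real \<omega> * w) * foxH11 \<alpha> (K * B2 powr of_real (- \<alpha> / 2))"
  proof -
    have n1: "of_real c + of_real \<omega> * w \<noteq> 0"
    proof
      assume "of_real c + of_real \<omega> * w = 0"
      then have "Re (of_real c + of_real \<omega> * w) = 0" by simp
      moreover have "\<omega> * Re w > 0" using om Rew by simp
      ultimately show False using c by simp
    qed
    have n2: "of_real (2 * c) + of_real \<omega> * w \<noteq> 0"
    proof
      assume "of_real (2 * c) + of_real \<omega> * w = 0"
      then have "Re (of_real (2 * c) + of_real \<omega> * w) = 0" by (simp only:) simp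
      moreover have "\<omega> * Re w > 0" using om Rew by simp
      ultimately show False using c by simp
    qed
    have pl: "complex_of_real (pi * lb) \<noteq> 0" using lb by simp
    have Ce: "C = complex_of_real (pi * lb) * of_real (2 * c)" by (simp add: C_def a0_def mult_ac)
    have "C / B1 = of_real (2 * c) / (of_real c + of_real \<omega> * w)"
      unfolding Ce B1_def using pl by (rule mult_divide_mult_cancel_left)
    moreover have "C / B2 = of_real (2 * c) / (of_real (2 * c) + of_real \<omega> * w)"
      unfolding Ce B2_def using pl by (rule mult_divide_mult_cancel_left)
    moreover have "\<And>X Y Z :: complex. X * (Y / Z) = (X / Z) * Y"
      by (simp only: times_divide_eq_right times_divide_eq_left)
    ultimately show ?thesis by metis
  qed
  finally show ?thesis by (simp add: \<Phi>_def w_def K_def B1_def B2_def)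
qed

theorem theorem1:
  fixes M :: "'a measure" and d1 d2 :: "'a \<Rightarrow> real"
    and c \<alpha> lb P \<sigma>2 \<omega> :: real and s :: complex
  assumes "c = 5 / 4"
    and "\<alpha> > 2" and "lb > 0" and "P > 0" and "\<sigma>2 \<ge> 0" and "\<omega> > 0"
    and "prob_space M"
    and "distributed M lborel d1 (\<lambda>x. ennreal (dist_density c lb x))"
    and "distributed M lborel d2 (\<lambda>x. ennreal (dist_density c lb x))"
    and "prob_space.indep_var M borel d1 borel d2"
    and "Re s > 0"
  shows
    "(LINT w|M. exp (- of_real (\<sigma>2 / P * (max (d1 w) (d2 w)) powr \<alpha>) * s
                     - of_real (pi * lb * \<omega> * (max (d1 w) (d2 w))\<^sup>2) * s powr of_real (2 / \<alpha>)))
     = of_real (2 * c) / (of_real c + of_real \<omega> * s powr of_real (2 / \<alpha>))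
         * foxH11 \<alpha> (of_real (\<sigma>2 / P) * s
             * (of_real (pi * lb) * (of_real c + of_real \<omega> * s powr of_real (2 / \<alpha>))) powr of_real (- \<alpha> / 2))
       - of_real (2 * c) / (of_real (2 * c) + of_real \<omega> * s powr of_real (2 / \<alpha>))
         * foxH11 \<alpha> (of_real (\<sigma>2 / P) * s
             * (of_real (pi * lb) * (of_real (2 * c) + of_real \<omega> * s powr of_real (2 / \<alpha>))) powr of_real (- \<alpha> / 2))
     \<and>
     ((\<lambda>q::real. LINT w|M. exp (- of_real (q * (max (d1 w) (d2 w)) powr \<alpha>) * s
                     - of_real (pi * lb * \<omega> * (max (d1 w) (d2 w))\<^sup>2) * s powr of_real (2 / \<alpha>)))
       \<longlongrightarrow> of_real (2 * c) / (of_real c + of_real \<omega> * s powr of_real (2 / \<alpha>))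
           - of_real (2 * c) / (of_real (2 * c) + of_real \<omega> * s powr of_real (2 / \<alpha>)))
       (at_right 0)"
proof -
  note A = assms
  have c: "c > 0" using A(1) by simp
  have qq: "\<sigma>2 / P \<ge> 0" using A(4,5) by simp
  note MC = main_closed[OF c A(2) A(3) _ A(6) A(7) A(8) A(9) A(10) A(11)]
  define \<phi> where "\<phi> q = (LINT w|M. exp (- of_real (q * (max (d1 w) (d2 w)) powr \<alpha>) * s
                     - of_real (pi * lb * \<omega> * (max (d1 w) (d2 w))\<^sup>2) * s powr of_real (2 / \<alpha>)))" for q :: real
  have phi0: "\<phi> 0 = of_real (2 * c) / (of_real c + of_real \<omega> * s powr of_real (2 / \<alpha>))
           - of_real (2 * c) / (of_real (2 * c) + of_real \<omega> * s powr of_real (2 / \<alpha>))"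
    using MC[of 0] by (simp add: \<phi>_def foxH11_def)
  interpret prob_space M by (rule A(7))
  have d1m[measurable]: "d1 \<in> borel_measurable M" using distributed_measurable[OF A(8)] by simp
  have d2m[measurable]: "d2 \<in> borel_measurable M" using distributed_measurable[OF A(9)] by simp
  have Rew: "Re (s powr of_real (2 / \<alpha>)) > 0" by (rule Re_spowr_pos[OF A(11) A(2)])
  have lim: "(\<phi> \<longlongrightarrow> \<phi> 0) (at_right 0)"
  proof (rule tendsto_at_right_sequentially[of 0 1])
    fix S :: "nat \<Rightarrow> real"
    assume Spos: "\<And>n. 0 < S n" and "\<And>n. S n < 1" and "decseq S" and S0: "S \<longlonglongrightarrow> 0"
    show "(\<lambda>n. \<phi> (S n)) \<longlonglongrightarrow> \<phi> 0"
      unfolding \<phi>_def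
    proof (rule integral_dominated_convergence[where w="\<lambda>_. 1"])
      show "(\<lambda>w. exp (- of_real (S n * (max (d1 w) (d2 w)) powr \<alpha>) * s
                     - of_real (pi * lb * \<omega> * (max (d1 w) (d2 w))\<^sup>2) * s powr of_real (2 / \<alpha>))) \<in> borel_measurable M" for n
        by measurable
      show "(\<lambda>w. exp (- of_real (0 * (max (d1 w) (d2 w)) powr \<alpha>) * s
                     - of_real (pi * lb * \<omega> * (max (d1 w) (d2 w))\<^sup>2) * s powr of_real (2 / \<alpha>))) \<in> borel_measurable M"
        by measurable
      show "integrable M (\<lambda>_. 1::real)" by simp
      show "AE w in M. (\<lambda>n. exp (- of_real (S n * (max (d1 w) (d2 w)) powr \<alpha>) * s
                     - of_real (pi * lb * \<omega> * (max (d1 w) (d2 w))\<^sup>2) * s powr of_real (2 / \<alpha>)))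
           \<longlonglongrightarrow> exp (- of_real (0 * (max (d1 w) (d2 w)) powr \<alpha>) * s
                     - of_real (pi * lb * \<omega> * (max (d1 w) (d2 w))\<^sup>2) * s powr of_real (2 / \<alpha>))"
        by (intro AE_I2 tendsto_intros S0)
      show "AE w in M. norm (exp (- of_real (S n * (max (d1 w) (d2 w)) powr \<alpha>) * s
                     - of_real (pi * lb * \<omega> * (max (d1 w) (d2 w))\<^sup>2) * s powr of_real (2 / \<alpha>))) \<le> 1" for n
      proof (intro AE_I2)
        fix w
        have "0 \<le> S n * (max (d1 w) (d2 w)) powr \<alpha> * Re s" using Spos[of n] A(11) by (simp add: less_imp_le)
        moreover have "0 \<le> pi * lb * \<omega> * (max (d1 w) (d2 w))\<^sup>2 * Re (s powr of_real (2 / \<alpha>))"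
          using A(3) A(6) Rew by simp
        ultimately show "norm (exp (- of_real (S n * (max (d1 w) (d2 w)) powr \<alpha>) * s
                     - of_real (pi * lb * \<omega> * (max (d1 w) (d2 w))\<^sup>2) * s powr of_real (2 / \<alpha>))) \<le> 1"
          by simp
      qed
    qed
  qed simp
  have lim': "(\<phi> \<longlongrightarrow> of_real (2 * c) / (of_real c + of_real \<omega> * s powr of_real (2 / \<alpha>))
           - of_real (2 * c) / (of_real (2 * c) + of_real \<omega> * s powr of_real (2 / \<alpha>))) (at_right 0)"
    using lim unfolding phi0 .
  show ?thesis
  proof (rule conjI)
    show "(LINT w|M. exp (- of_real (\<sigma>2 / P * (max (d1 w) (d2 w)) powr \<alpha>) * s
                     - of_real (pi * lb * \<omega> * (max (d1 w) (d2 w))\<^sup>2) * s powr of_real (2 / \<alpha>)))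
     = of_real (2 * c) / (of_real c + of_real \<omega> * s powr of_real (2 / \<alpha>))
         * foxH11 \<alpha> (of_real (\<sigma>2 / P) * s
             * (of_real (pi * lb) * (of_real c + of_real \<omega> * s powr of_real (2 / \<alpha>))) powr of_real (- \<alpha> / 2))
       - of_real (2 * c) / (of_real (2 * c) + of_real \<omega> * s powr of_real (2 / \<alpha>))
         * foxH11 \<alpha> (of_real (\<sigma>2 / P) * s
             * (of_real (pi * lb) * (of_real (2 * c) + of_real \<omega> * s powr of_real (2 / \<alpha>))) powr of_real (- \<alpha> / 2))"
      by (rule MC[OF qq])
    show "((\<lambda>q::real. LINT w|M. exp (- of_real (q * (max (d1 w) (d2 w)) powr \<alpha>) * s
                     - of_real (pi * lb * \<omega> * (max (d1 w) (d2 w))\<^sup>2) * s powr of_real (2 / \<alpha>)))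
       \<longlongrightarrow> of_real (2 * c) / (of_real c + of_real \<omega> * s powr of_real (2 / \<alpha>))
           - of_real (2 * c) / (of_real (2 * c) + of_real \<omega> * s powr of_real (2 / \<alpha>)))
       (at_right 0)"
      using lim' unfolding \<phi>_def[abs_def] .
  qed
qed

end
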